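(* Let $\phi\in L^2(\mathbb{R})$ be compactly supported and not almost everywhere zero, and let $B>0$. Then for all $f,g\in\mathrm{PW}^2_B$ the following are equivalent: (1) $f=e^{i\alpha}g$ for some $\alpha\in\mathbb{R}$; (2) $|\mathcal{V}_\phi f(x,\omega)|=|\mathcal{V}_\phi g(x,\omega)|$ for all $x,\omega\in\mathbb{R}$.
   Context: For $B>0$, the Paley--Wiener space is $\mathrm{PW}^2_B:=\{f:\mathbb{C}\to\mathbb{C} \mid \exists F\in L^2([-B,B])\ \forall z\in\mathbb{C}: f(z)=\int_{-B}^B F(\xi)e^{2\pi i \xi z}\,d\xi\}$; its elements are identified with their restrictions to $\mathbb{R}$ (which lie in $L^2(\mathbb{R})$) when transforms are applied. For $f,\phi\in L^2(\mathbb{R})$ the short-time Fourier transform is $\mathcal{V}_\phi f(x,\omega)=\int_{\mathbb{R}} f(t)\overline{\phi(t-x)}e^{-2\pi i t\omega}\,dt$, $x,\omega\in\mathbb{R}$. *)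

theory Defs
  imports "HOL-Analysis.Analysis"
begin

definition square_integrable_on :: "(real \<Rightarrow> complex) \<Rightarrow> real set \<Rightarrow> bool" where
  "square_integrable_on F S \<longleftrightarrow>
     set_borel_measurable lebesgue S F \<and>
     set_integrable lebesgue S (\<lambda>x. (cmod (F x))\<^sup>2)"

definition paley_wiener :: "real \<Rightarrow> (complex \<Rightarrow> complex) set" where
  "paley_wiener B = {f. \<exists>F. square_integrable_on F {-B..B} \<and>
     (\<forall>z. f z = (LINT \<xi>:{-B..B}|lebesgue. F \<xi> * exp (2 * pi * \<i> * complex_of_real \<xi> * z)))}"

definition stft :: "(real \<Rightarrow> complex) \<Rightarrow> (real \<Rightarrow> complex) \<Rightarrow> real \<Rightarrow> real \<Rightarrow> complex" where
  "stft \<phi> f x \<omega> = (LINT t|lebesgue. f t * cnj (\<phi> (t - x)) * exp (- 2 * pi * \<i> * complex_of_real t * complex_of_real \<omega>))"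

definition compactly_supported :: "(real \<Rightarrow> complex) \<Rightarrow> bool" where
  "compactly_supported \<phi> \<longleftrightarrow> (\<exists>R. AE t in lebesgue. \<bar>t\<bar> > R \<longrightarrow> \<phi> t = 0)"

end

theory Submission
  imports Defs "HOL-Probability.Probability" "HOL-Complex_Analysis.Complex_Analysis"
begin

lemma char_density:
  fixes p :: "real \<Rightarrow> real"
  assumes [measurable]: "p \<in> borel_measurable borel" and nn: "\<And>x. 0 \<le> p x"
  shows "char (density lborel (\<lambda>x. ennreal (p x))) t = (LBINT x. p x *\<^sub>R iexp (t * x))"
  unfolding char_def using nn by (subst integral_density) auto

lemma real_distribution_density:
  fixes p :: "real \<Rightarrow> real"
  assumes [measurable]: "p \<in> borel_measurable borel" and nn: "\<And>x. 0 \<le> p x"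
    and int: "integrable lborel p" and one: "(LBINT x. p x) = 1"
  shows "real_distribution (density lborel (\<lambda>x. ennreal (p x)))"
proof -
  have "emeasure (density lborel (\<lambda>x. ennreal (p x))) UNIV = (\<integral>\<^sup>+x. ennreal (p x) \<partial>lborel)"
    by (subst emeasure_density) auto
  also have "\<dots> = ennreal (LBINT x. p x)"
    using int nn by (subst nn_integral_eq_integral) auto
  finally have "emeasure (density lborel (\<lambda>x. ennreal (p x))) (space (density lborel (\<lambda>x. ennreal (p x)))) = 1"
    using one by simp
  then show ?thesis
    unfolding real_distribution_def real_distribution_axioms_def
    by (auto intro!: prob_spaceI)
qed

lemma fourier_unique_real:
  fixes d :: "real \<Rightarrow> real"
  assumes int: "integrable lborel d" and z: "\<And>t. (LBINT x. d x *\<^sub>R iexp (t * x)) = 0"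
  shows "AE x in lborel. d x = 0"
proof -
  define dp where "dp x = max (d x) 0" for x
  define dn where "dn x = max (- d x) 0" for x
  have [measurable]: "d \<in> borel_measurable borel" using int by auto
  have mp[measurable]: "dp \<in> borel_measurable borel" "dn \<in> borel_measurable borel"
    unfolding dp_def dn_def by measurable
  have ip: "integrable lborel dp" "integrable lborel dn"
    unfolding dp_def dn_def using int by auto
  have nn: "\<And>x. 0 \<le> dp x" "\<And>x. 0 \<le> dn x" by (auto simp: dp_def dn_def)
  have dd: "d x = dp x - dn x" for x by (auto simp: dp_def dn_def)
  have ipe: "integrable lborel (\<lambda>x. q x *\<^sub>R iexp (t * x))" if "integrable lborel q" for q :: "real \<Rightarrow> real" and t
  proof (rule Bochner_Integration.integrable_bound[OF that])
    have [measurable]: "q \<in> borel_measurable borel" using that by auto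
    show "(\<lambda>x. q x *\<^sub>R iexp (t * x)) \<in> borel_measurable lborel" by measurable
  qed (auto simp: norm_exp_i_times)
  have eq: "(LBINT x. dp x *\<^sub>R iexp (t * x)) = (LBINT x. dn x *\<^sub>R iexp (t * x))" for t
  proof -
    have "(LBINT x. dp x *\<^sub>R iexp (t * x)) - (LBINT x. dn x *\<^sub>R iexp (t * x))
        = (LBINT x. d x *\<^sub>R iexp (t * x))"
    proof -
      have "(LBINT x. dp x *\<^sub>R iexp (t * x)) - (LBINT x. dn x *\<^sub>R iexp (t * x))
          = (LBINT x. dp x *\<^sub>R iexp (t * x) - dn x *\<^sub>R iexp (t * x))"
        by (rule Bochner_Integration.integral_diff[symmetric]) (intro ipe ip)+
      then show ?thesis by (simp add: dd scaleR_diff_left)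
    qed
    with z show ?thesis by simp
  qed
  have m: "(LBINT x. dp x) = (LBINT x. dn x)"
    using eq[of 0] by (simp add: scaleR_conv_of_real)
  show ?thesis
  proof (cases "(LBINT x. dp x) = 0")
    case True
    have "AE x in lborel. dp x = 0" 
      using True ip nn by (subst integral_nonneg_eq_0_iff_AE[symmetric]) auto
    moreover have "AE x in lborel. dn x = 0"
      using True m ip nn by (subst integral_nonneg_eq_0_iff_AE[symmetric]) auto
    ultimately show ?thesis by eventually_elim (simp add: dd)
  next
    case False
    define m where "m = (LBINT x. dp x)"
    have mpos: "m > 0" using False nn ip by (auto simp: m_def intro!: integral_nonneg_AE order.not_eq_order_implies_strict)
    have rp: "real_distribution (density lborel (\<lambda>x. ennreal (dp x / m)))"
      using mpos nn ip by (intro real_distribution_density) (auto simp: m_def)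
    have rn: "real_distribution (density lborel (\<lambda>x. ennreal (dn x / m)))"
      using mpos nn ip m by (intro real_distribution_density) (auto simp: m_def)
    have "char (density lborel (\<lambda>x. ennreal (dp x / m))) = char (density lborel (\<lambda>x. ennreal (dn x / m)))"
    proof
      fix t
      show "char (density lborel (\<lambda>x. ennreal (dp x / m))) t = char (density lborel (\<lambda>x. ennreal (dn x / m))) t"
      proof -
        have *: "(LBINT x. (q x / m) *\<^sub>R iexp (t * x)) = (1/m) *\<^sub>R (LBINT x. q x *\<^sub>R iexp (t * x))" for q
          by (subst integral_scaleR_right[symmetric]) (simp add: divide_inverse mult.commute)
        have "char (density lborel (\<lambda>x. ennreal (dp x / m))) t = (LBINT x. (dp x / m) *\<^sub>R iexp (t * x))"
          using mpos nn by (intro char_density) auto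
        moreover have "char (density lborel (\<lambda>x. ennreal (dn x / m))) t = (LBINT x. (dn x / m) *\<^sub>R iexp (t * x))"
          using mpos nn by (intro char_density) auto
        ultimately show ?thesis using eq[of t] by (simp only: *)
      qed
    qed
    from Levy_uniqueness[OF rp rn this]
    have "AE x in lborel. ennreal (dp x / m) = ennreal (dn x / m)"
    proof (subst finite_density_unique[symmetric])
      have "(\<integral>\<^sup>+x. ennreal (dp x / m) \<partial>lborel) = ennreal (LBINT x. dp x / m)"
        using mpos nn ip by (intro nn_integral_eq_integral) auto
      then show "(\<integral>\<^sup>+x. ennreal (dp x / m) \<partial>lborel) \<noteq> \<infinity>" by simp
    qed auto
    then show ?thesis
    proof eventually_elim
      case (elim x) then have "dp x = dn x" using mpos nn by (simp add: ennreal_inj)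
      then show ?case unfolding dp_def dn_def by (auto simp: max_def split: if_splits)
    qed
  qed
qed

definition FT :: "(real \<Rightarrow> complex) \<Rightarrow> real \<Rightarrow> complex" where
  "FT h \<omega> = (LBINT t. h t * exp (complex_of_real (- 2 * pi) * \<i> * complex_of_real t * complex_of_real \<omega>))"

lemma integrable_mult_iexp:
  fixes D :: "real \<Rightarrow> complex"
  assumes "integrable lborel D" shows "integrable lborel (\<lambda>x. D x * iexp (t * x))"
proof (rule Bochner_Integration.integrable_bound[OF assms])
  have [measurable]: "D \<in> borel_measurable borel" using assms by auto
  show "(\<lambda>x. D x * iexp (t * x)) \<in> borel_measurable lborel" by measurable
qed (auto simp: norm_mult norm_exp_i_times)

lemma re_id: "complex_of_real (Re z) = (z + cnj z)/2" by (simp add: complex_eq_iff)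
lemma im_id: "complex_of_real (Im z) = (z - cnj z)/(2*\<i>)" by (simp add: complex_eq_iff)

lemma fourier_unique:
  fixes D :: "real \<Rightarrow> complex"
  assumes int: "integrable lborel D" and z: "\<And>\<omega>. FT D \<omega> = 0"
  shows "AE x in lborel. D x = 0"
proof -
  have [measurable]: "D \<in> borel_measurable borel" using int by auto
  have z1: "(LBINT x. D x * iexp (t * x)) = 0" for t
  proof -
    have "(LBINT x. D x * iexp (t * x)) = FT D (- t / (2 * pi))"
      unfolding FT_def by (intro Bochner_Integration.integral_cong refl) (simp add: field_simps)
    then show ?thesis using z by simp
  qed
  have z2: "(LBINT x. cnj (D x) * iexp (t * x)) = 0" for t
  proof -
    have "cnj (LBINT x. D x * iexp ((- t) * x)) = (LBINT x. cnj (D x * iexp ((- t) * x)))"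
      by (rule Bochner_Integration.integral_cnj[symmetric])
    also have "\<dots> = (LBINT x. cnj (D x) * iexp (t * x))"
      by (intro Bochner_Integration.integral_cong refl) (simp add: exp_cnj)
    finally have "(LBINT x. cnj (D x) * iexp (t * x)) = cnj (LBINT x. D x * iexp ((- t) * x))" ..
    then show ?thesis using z1[of "-t"] by simp
  qed
  have ic: "integrable lborel (\<lambda>x. cnj (D x))" using int by simp
  have re: "AE x in lborel. Re (D x) = 0"
  proof (rule fourier_unique_real)
    show "integrable lborel (\<lambda>x. Re (D x))" using int by simp
    fix t
    have "(LBINT x. Re (D x) *\<^sub>R iexp (t * x)) = (LBINT x. (D x * iexp (t * x) + cnj (D x) * iexp (t * x)) / 2)"
      by (intro Bochner_Integration.integral_cong refl)
         (simp add: scaleR_conv_of_real re_id algebra_simps add_divide_distrib)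
    also have "\<dots> = ((LBINT x. D x * iexp (t * x)) + (LBINT x. cnj (D x) * iexp (t * x))) / 2"
      by (subst Bochner_Integration.integral_add[OF integrable_mult_iexp[OF int] integrable_mult_iexp[OF ic], symmetric]) simp
    finally show "(LBINT x. Re (D x) *\<^sub>R iexp (t * x)) = 0" using z1 z2 by simp
  qed
  have im: "AE x in lborel. Im (D x) = 0"
  proof (rule fourier_unique_real)
    show "integrable lborel (\<lambda>x. Im (D x))" using int by simp
    fix t
    have "(LBINT x. Im (D x) *\<^sub>R iexp (t * x)) = (LBINT x. (D x * iexp (t * x) - cnj (D x) * iexp (t * x)) / (2 * \<i>))"
      by (intro Bochner_Integration.integral_cong refl)
         (simp add: scaleR_conv_of_real im_id algebra_simps diff_divide_distrib)
    also have "\<dots> = ((LBINT x. D x * iexp (t * x)) - (LBINT x. cnj (D x) * iexp (t * x))) / (2 * \<i>)"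
      by (subst Bochner_Integration.integral_diff[OF integrable_mult_iexp[OF int] integrable_mult_iexp[OF ic], symmetric]) simp
    finally show "(LBINT x. Im (D x) *\<^sub>R iexp (t * x)) = 0" using z1 z2 by simp
  qed
  from re im show ?thesis by eventually_elim (simp add: complex_eq_iff)
qed

lemma tendsto_integral_at:
  fixes s :: "'c::metric_space \<Rightarrow> 'a \<Rightarrow> 'b::{banach, second_countable_topology}"
  assumes ms: "\<And>y. s y \<in> borel_measurable M" and mf: "f \<in> borel_measurable M"
    and w: "integrable M w"
    and lim: "AE x in M. ((\<lambda>y. s y x) \<longlongrightarrow> f x) (at z within S)"
    and bound: "\<forall>\<^sub>F y in at z within S. AE x in M. norm (s y x) \<le> w x"
  shows "((\<lambda>y. integral\<^sup>L M (s y)) \<longlongrightarrow> integral\<^sup>L M f) (at z within S)"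
proof (subst tendsto_at_iff_sequentially, intro allI impI)
  fix X :: "nat \<Rightarrow> 'c" assume XS: "\<forall>i. X i \<in> S - {z}" and Xl: "X \<longlonglongrightarrow> z"
  have X: "filterlim X (at z within S) sequentially"
    using XS Xl by (auto simp: filterlim_at)
  from filterlim_iff[THEN iffD1, OF X, rule_format, OF bound]
  obtain N where wN: "\<And>n. N \<le> n \<Longrightarrow> AE x in M. norm (s (X n) x) \<le> w x"
    by (auto simp: eventually_sequentially)
  show "((\<lambda>y. integral\<^sup>L M (s y)) \<circ> X) \<longlonglongrightarrow> integral\<^sup>L M f"
    unfolding comp_def
  proof (rule LIMSEQ_offset, rule integral_dominated_convergence)
    show "AE x in M. norm (s (X (n + N)) x) \<le> w x" for n
      by (rule wN) auto
    show "AE x in M. (\<lambda>n. s (X (n + N)) x) \<longlonglongrightarrow> f x"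
      using lim
    proof eventually_elim
      fix x assume "((\<lambda>y. s y x) \<longlongrightarrow> f x) (at z within S)"
      then show "(\<lambda>n. s (X (n + N)) x) \<longlonglongrightarrow> f x"
        by (intro LIMSEQ_ignore_initial_segment filterlim_compose[OF _ X])
    qed
  qed (use ms mf w in auto)
qed

lemma norm_exp_quot_bound:
  fixes a y z :: complex
  assumes "norm a * norm (y - z) \<le> 1/2" "y \<noteq> z"
  shows "norm ((exp (a * y) - exp (a * z)) / (y - z)) \<le> exp (norm a * norm z) * (3/2 * norm a)"
proof -
  have "exp (a * y) - exp (a * z) = exp (a * z) * (exp (a * (y - z)) - 1)"
    by (simp add: algebra_simps exp_add[symmetric])
  then have "norm ((exp (a * y) - exp (a * z)) / (y - z)) = norm (exp (a * z)) * norm (exp (a * (y - z)) - 1) / norm (y - z)"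
    by (simp add: norm_mult norm_divide)
  also have "\<dots> \<le> exp (norm a * norm z) * (3/2 * norm (a * (y - z))) / norm (y - z)"
  proof (intro divide_right_mono mult_mono)
    show "norm (exp (a * z)) \<le> exp (norm a * norm z)"
      using norm_exp[of "a*z"] by (simp add: norm_mult)
    show "norm (exp (a * (y - z)) - 1) \<le> 3 / 2 * norm (a * (y - z))"
      using assms by (intro norm_exp_bounds) (simp add: norm_mult)
  qed auto
  also have "\<dots> = exp (norm a * norm z) * (3/2 * norm a)"
    using assms by (simp add: norm_mult)
  finally show ?thesis .
qed

lemma holo_FT:
  fixes F :: "real \<Rightarrow> complex" and c :: complex
  assumes int: "integrable lborel F" and supp: "\<And>\<xi>. M < \<bar>\<xi>\<bar> \<Longrightarrow> F \<xi> = 0"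
  shows "(\<lambda>z. LBINT \<xi>. F \<xi> * exp (c * of_real \<xi> * z)) holomorphic_on UNIV"
proof -
  have [measurable]: "F \<in> borel_measurable borel" using int by auto
  define K where "K = max M 0"
  have suppK: "\<And>\<xi>. F \<xi> \<noteq> 0 \<Longrightarrow> \<bar>\<xi>\<bar> \<le> K" using supp by (force simp: K_def)
  have intexp: "integrable lborel (\<lambda>\<xi>. F \<xi> * exp (c * of_real \<xi> * z))" for z
  proof (rule Bochner_Integration.integrable_bound[of _ "\<lambda>\<xi>. exp (norm c * K * norm z) * F \<xi>"])
    show "integrable lborel (\<lambda>\<xi>. exp (norm c * K * norm z) * F \<xi>)" using int by simp
    show "(\<lambda>\<xi>. F \<xi> * exp (c * of_real \<xi> * z)) \<in> borel_measurable lborel" by measurable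
    have "norm (F \<xi> * exp (c * of_real \<xi> * z)) \<le> norm (exp (norm c * K * norm z) * F \<xi>)" for \<xi>
    proof (cases "F \<xi> = 0")
      case False
      then have "\<bar>\<xi>\<bar> \<le> K" using suppK by blast
      then have "norm (c * of_real \<xi> * z) \<le> norm c * K * norm z"
        by (simp add: norm_mult mult_mono mult_right_mono)
      then have "norm (exp (c * of_real \<xi> * z)) \<le> exp (norm c * K * norm z)"
        using norm_exp[of "c * of_real \<xi> * z"] by (meson exp_le_cancel_iff order_trans)
      from mult_left_mono[OF this norm_ge_zero[of "F \<xi>"]]
      show ?thesis by (simp add: norm_mult mult.commute)
    qed simp
    then show "AE \<xi> in lborel. norm (F \<xi> * exp (c * of_real \<xi> * z)) \<le> norm (exp (norm c * K * norm z) * F \<xi>)" by simp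
  qed
  show ?thesis
  unfolding holomorphic_on_def
  proof
    fix z :: complex
    define G' where "G' = (LBINT \<xi>. F \<xi> * (c * of_real \<xi> * exp (c * of_real \<xi> * z)))"
    define \<delta> where "\<delta> = 1 / (2 * (norm c * K + 1))"
    have cK: "0 \<le> norm c * K" by (simp add: K_def)
    have \<delta>: "\<delta> > 0" unfolding \<delta>_def using cK by (simp add: add_pos_nonneg)
    have "((\<lambda>y. (LBINT \<xi>. F \<xi> * ((exp (c * of_real \<xi> * y) - exp (c * of_real \<xi> * z)) / (y - z)))) \<longlongrightarrow> G') (at z)"
      unfolding G'_def
    proof (rule tendsto_integral_at[where w="\<lambda>\<xi>. norm (F \<xi>) * (exp (norm c * K * norm z) * (3/2 * (norm c * K)))"])
      show "integrable lborel (\<lambda>\<xi>. norm (F \<xi>) * (exp (norm c * K * norm z) * (3/2 * (norm c * K))))"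
        using int by simp
      show "AE \<xi> in lborel. ((\<lambda>y. F \<xi> * ((exp (c * of_real \<xi> * y) - exp (c * of_real \<xi> * z)) / (y - z)))
              \<longlongrightarrow> F \<xi> * (c * of_real \<xi> * exp (c * of_real \<xi> * z))) (at z)"
      proof (intro AE_I2 tendsto_mult tendsto_const)
        fix \<xi> :: real
        have "((\<lambda>y. exp (c * of_real \<xi> * y)) has_field_derivative (c * of_real \<xi> * exp (c * of_real \<xi> * z))) (at z)"
          by (auto intro!: derivative_eq_intros)
        then show "((\<lambda>y. (exp (c * of_real \<xi> * y) - exp (c * of_real \<xi> * z)) / (y - z))
              \<longlongrightarrow> c * of_real \<xi> * exp (c * of_real \<xi> * z)) (at z)"
          by (simp add: has_field_derivative_iff)
      qed
      show "\<forall>\<^sub>F y in at z. AE \<xi> in lborel. norm (F \<xi> * ((exp (c * of_real \<xi> * y) - exp (c * of_real \<xi> * z)) / (y - z)))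
               \<le> norm (F \<xi>) * (exp (norm c * K * norm z) * (3/2 * (norm c * K)))"
      proof -
        have "\<forall>\<^sub>F y in at z. y \<noteq> z \<and> dist y z < \<delta>"
          using \<delta> by (auto simp: eventually_at)
        then show ?thesis
        proof eventually_elim
          case (elim y)
          show ?case
          proof (intro AE_I2)
            fix \<xi> :: real
            show "norm (F \<xi> * ((exp (c * of_real \<xi> * y) - exp (c * of_real \<xi> * z)) / (y - z)))
               \<le> norm (F \<xi>) * (exp (norm c * K * norm z) * (3/2 * (norm c * K)))"
            proof (cases "F \<xi> = 0")
              case False
              then have xK: "\<bar>\<xi>\<bar> \<le> K" using suppK by blast
              have ca: "norm (c * of_real \<xi>) \<le> norm c * K"
                using xK by (simp add: norm_mult mult_left_mono)
              have "norm (c * of_real \<xi>) * norm (y - z) \<le> (norm c * K) * \<delta>"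
                using elim ca cK by (intro mult_mono) (auto simp: dist_norm)
              also have "\<dots> \<le> 1/2" unfolding \<delta>_def using cK by (simp add: field_simps)
              finally have "norm ((exp (c * of_real \<xi> * y) - exp (c * of_real \<xi> * z)) / (y - z))
                  \<le> exp (norm (c * of_real \<xi>) * norm z) * (3/2 * norm (c * of_real \<xi>))"
                using norm_exp_quot_bound[of "c * of_real \<xi>" y z] elim by (simp add: mult.assoc)
              also have "\<dots> \<le> exp (norm c * K * norm z) * (3/2 * (norm c * K))"
                using ca by (intro mult_mono) (auto intro: mult_right_mono)
              finally have qb: "norm ((exp (c * of_real \<xi> * y) - exp (c * of_real \<xi> * z)) / (y - z))
                  \<le> exp (norm c * K * norm z) * (3/2 * (norm c * K))" .
              show ?thesis using mult_left_mono[OF qb norm_ge_zero[of "F \<xi>"]] by (simp only: norm_mult)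
            qed simp
          qed
        qed
      qed
    qed measurable
    then have "((\<lambda>y. ((LBINT \<xi>. F \<xi> * exp (c * of_real \<xi> * y)) - (LBINT \<xi>. F \<xi> * exp (c * of_real \<xi> * z))) / (y - z)) \<longlongrightarrow> G') (at z)"
    proof (rule Lim_transform_eventually)
      show "\<forall>\<^sub>F y in at z. (LBINT \<xi>. F \<xi> * ((exp (c * of_real \<xi> * y) - exp (c * of_real \<xi> * z)) / (y - z)))
           = ((LBINT \<xi>. F \<xi> * exp (c * of_real \<xi> * y)) - (LBINT \<xi>. F \<xi> * exp (c * of_real \<xi> * z))) / (y - z)"
      proof (intro always_eventually allI)
        fix y
        have "(LBINT \<xi>. F \<xi> * ((exp (c * of_real \<xi> * y) - exp (c * of_real \<xi> * z)) / (y - z)))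
            = (LBINT \<xi>. (F \<xi> * exp (c * of_real \<xi> * y) - F \<xi> * exp (c * of_real \<xi> * z)) / (y - z))"
          by (simp add: algebra_simps diff_divide_distrib)
        also have "\<dots> = (LBINT \<xi>. (F \<xi> * exp (c * of_real \<xi> * y) - F \<xi> * exp (c * of_real \<xi> * z))) / (y - z)"
          by simp
        also have "\<dots> = ((LBINT \<xi>. F \<xi> * exp (c * of_real \<xi> * y)) - (LBINT \<xi>. F \<xi> * exp (c * of_real \<xi> * z))) / (y - z)"
          by (subst Bochner_Integration.integral_diff[OF intexp intexp]) simp
        finally show "(LBINT \<xi>. F \<xi> * ((exp (c * of_real \<xi> * y) - exp (c * of_real \<xi> * z)) / (y - z)))
           = ((LBINT \<xi>. F \<xi> * exp (c * of_real \<xi> * y)) - (LBINT \<xi>. F \<xi> * exp (c * of_real \<xi> * z))) / (y - z)" .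
      qed
    qed
    then have "((\<lambda>z. LBINT \<xi>. F \<xi> * exp (c * of_real \<xi> * z)) has_field_derivative G') (at z)"
      by (simp add: has_field_derivative_iff)
    then show "(\<lambda>z. LBINT \<xi>. F \<xi> * exp (c * of_real \<xi> * z)) field_differentiable at z within UNIV"
      by (auto simp: field_differentiable_def)
  qed
qed

lemma borel_measurable_cnj'[measurable]: "f \<in> borel_measurable M \<Longrightarrow> (\<lambda>x. cnj (f x :: complex)) \<in> borel_measurable M"
  by (rule borel_measurable_continuous_on[where f=cnj]) (auto intro: continuous_intros)

lemma borel_version:
  fixes g :: "real \<Rightarrow> complex"
  assumes "g \<in> borel_measurable lebesgue"
  obtains g' where "g' \<in> borel_measurable borel" "AE x in lborel. g x = g' x"
proof -
  have "(\<lambda>x. Re (g x)) \<in> borel_measurable (completion lborel)" using assms by measurable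
  from completion_ex_borel_measurable_real[OF this] obtain r
    where r: "r \<in> borel_measurable lborel" "AE x in lborel. Re (g x) = r x" by blast
  have "(\<lambda>x. Im (g x)) \<in> borel_measurable (completion lborel)" using assms by measurable
  from completion_ex_borel_measurable_real[OF this] obtain i
    where i: "i \<in> borel_measurable lborel" "AE x in lborel. Im (g x) = i x" by blast
  have [measurable]: "r \<in> borel_measurable borel" "i \<in> borel_measurable borel" using r(1) i(1) by auto
  have "(\<lambda>x. complex_of_real (r x) + \<i> * complex_of_real (i x)) \<in> borel_measurable borel"
    by measurable
  moreover have "AE x in lborel. g x = complex_of_real (r x) + \<i> * complex_of_real (i x)"
    using r(2) i(2) by eventually_elim (simp add: complex_eq_iff)
  ultimately show ?thesis using that by blast
qed

lemma completion_measurable_AE: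
  fixes f g :: "'a \<Rightarrow> 'b::topological_space"
  assumes g: "g \<in> borel_measurable M" and ae: "AE x in M. f x = g x"
  shows "f \<in> borel_measurable (completion M)"
proof (rule measurableI)
  fix x assume "x \<in> space (completion M)" then show "f x \<in> space borel" by simp
next
  fix A :: "'b set" assume A: "A \<in> sets borel"
  from AE_E[OF ae] obtain N where N: "{x \<in> space M. \<not> f x = g x} \<subseteq> N" "emeasure M N = 0" "N \<in> sets M"
    by blast
  show "f -` A \<inter> space (completion M) \<in> sets (completion M)"
  proof (rule sets_completionI[where S="g -` A \<inter> space M - N" and N="f -` A \<inter> space M \<inter> N" and N'=N])
    show "f -` A \<inter> space (completion M) = (g -` A \<inter> space M - N) \<union> (f -` A \<inter> space M \<inter> N)"
      using N by auto
    show "f -` A \<inter> space M \<inter> N \<subseteq> N" by auto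
    show "N \<in> null_sets M" using N by auto
    show "g -` A \<inter> space M - N \<in> sets M" using measurable_sets[OF g A] N by auto
  qed
qed

lemma AE_lborel_translate:
  fixes c :: real
  assumes "AE x in lborel. P x"
  shows "AE t in lborel. P (t + c)"
proof -
  from AE_E[OF assms] obtain N where N: "{x \<in> space lborel. \<not> P x} \<subseteq> N" "emeasure lborel N = 0" "N \<in> sets lborel"
    by blast
  have Nb: "N \<in> sets borel" using N by simp
  have "emeasure lborel ((+) c -` N \<inter> space lborel) = emeasure (distr lborel borel ((+) c)) N"
    using Nb by (subst emeasure_distr) auto
  also have "\<dots> = 0" using N by (simp add: lborel_distr_plus)
  moreover have "((+) c :: real \<Rightarrow> real) \<in> borel_measurable borel" by measurable
  then have "(+) c -` N \<in> sets borel" using Nb by (rule measurable_sets_borel)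
  ultimately have nn: "(+) c -` N \<inter> space lborel \<in> null_sets lborel"
    by (auto simp: null_sets_def)
  show ?thesis by (rule AE_I'[OF nn]) (use N in \<open>auto simp: add.commute\<close>)
qed

lemma le_one_plus_sq: "(a::real) \<le> 1 + a\<^sup>2"
proof -
  have "0 \<le> (a - 1/2)\<^sup>2" by simp
  then show ?thesis by (simp add: power2_eq_square algebra_simps)
qed

lemma PW_repr:
  assumes "f \<in> paley_wiener B"
  obtains F where "integrable lborel F" "\<And>\<xi>. B < \<bar>\<xi>\<bar> \<Longrightarrow> F \<xi> = 0"
    "\<And>z. f z = (LBINT \<xi>. F \<xi> * exp (complex_of_real (2 * pi) * \<i> * complex_of_real \<xi> * z))"
proof -
  obtain F0 where sq: "square_integrable_on F0 {-B..B}"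
    and rep: "\<And>z. f z = (CLINT \<xi>:{-B..B}|lebesgue. F0 \<xi> * exp (complex_of_real (2 * pi) * \<i> * complex_of_real \<xi> * z))"
    using assms by (auto simp: paley_wiener_def)
  define S where "S = {-B..B}"
  define G where "G \<xi> = indicator S \<xi> *\<^sub>R F0 \<xi>" for \<xi>
  have Gm[measurable]: "G \<in> borel_measurable lebesgue"
    using sq unfolding square_integrable_on_def set_borel_measurable_def G_def[abs_def] S_def by simp
  have Gi: "integrable lebesgue G"
  proof (rule Bochner_Integration.integrable_bound[where f="\<lambda>x. indicator S x + indicator S x *\<^sub>R (cmod (F0 x))\<^sup>2"])
    have sqi: "integrable lebesgue (\<lambda>x. indicator S x *\<^sub>R (cmod (F0 x))\<^sup>2)"
      using sq unfolding square_integrable_on_def set_integrable_def S_def by simp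
    have "emeasure lebesgue S < \<infinity>" unfolding S_def by (subst emeasure_completion) (auto simp: emeasure_lborel_Icc_eq)
    then have "integrable lebesgue (indicator S :: real \<Rightarrow> real)" by (intro integrable_real_indicator) (auto simp: S_def)
    with sqi show "integrable lebesgue (\<lambda>x. indicator S x + indicator S x *\<^sub>R (cmod (F0 x))\<^sup>2 :: real)"
      by (intro Bochner_Integration.integrable_add)
    show "G \<in> borel_measurable lebesgue" by (rule Gm)
    show "AE x in lebesgue. norm (G x) \<le> norm (indicator S x + indicator S x *\<^sub>R (cmod (F0 x))\<^sup>2 :: real)"
      by (intro AE_I2) (auto simp: G_def indicator_def le_one_plus_sq)
  qed
  obtain Gb where Gb: "Gb \<in> borel_measurable borel" "AE x in lborel. G x = Gb x"
    using borel_version[OF Gm] by blast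
  define F where "F \<xi> = indicator S \<xi> *\<^sub>R Gb \<xi>" for \<xi>
  have Fm[measurable]: "F \<in> borel_measurable borel" unfolding F_def S_def using Gb(1) by measurable
  have GF: "AE x in lborel. G x = F x"
    using Gb(2) by eventually_elim (auto simp: G_def F_def indicator_def)
  have Fi: "integrable lborel F"
  proof -
    have "integrable lebesgue F"
      using Gi GF Gm by (subst integrable_cong_AE[where g=G]) (auto simp: AE_completion_iff measurable_completion eq_commute)
    then show ?thesis by (simp add: integrable_completion)
  qed
  show ?thesis
  proof (rule that[OF Fi])
    show "B < \<bar>\<xi>\<bar> \<Longrightarrow> F \<xi> = 0" for \<xi> by (auto simp: F_def S_def indicator_def)
    fix z
    have "f z = (LINT \<xi>|lebesgue. G \<xi> * exp (complex_of_real (2 * pi) * \<i> * complex_of_real \<xi> * z))"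
      unfolding rep set_lebesgue_integral_def G_def S_def
      by (intro Bochner_Integration.integral_cong refl) (simp add: indicator_def)
    also have "\<dots> = (LINT \<xi>|lebesgue. F \<xi> * exp (complex_of_real (2 * pi) * \<i> * complex_of_real \<xi> * z))"
    proof (intro integral_cong_AE)
      have Em[measurable]: "(\<lambda>\<xi>::real. exp (complex_of_real (2 * pi) * \<i> * complex_of_real \<xi> * z)) \<in> borel_measurable lebesgue"
        by (intro measurable_completion) measurable
      have "F \<in> borel_measurable lebesgue" by (intro measurable_completion) simp
      then show "(\<lambda>\<xi>. F \<xi> * exp (complex_of_real (2 * pi) * \<i> * complex_of_real \<xi> * z)) \<in> borel_measurable lebesgue"
        by measurable
      show "(\<lambda>\<xi>. G \<xi> * exp (complex_of_real (2 * pi) * \<i> * complex_of_real \<xi> * z)) \<in> borel_measurable lebesgue"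
        by measurable
      show "AE \<xi> in lebesgue. G \<xi> * exp (complex_of_real (2 * pi) * \<i> * complex_of_real \<xi> * z) = F \<xi> * exp (complex_of_real (2 * pi) * \<i> * complex_of_real \<xi> * z)"
        using GF by (simp add: AE_completion_iff)
    qed
    also have "\<dots> = (LBINT \<xi>. F \<xi> * exp (complex_of_real (2 * pi) * \<i> * complex_of_real \<xi> * z))"
      by (intro integral_completion) measurable
    finally show "f z = (LBINT \<xi>. F \<xi> * exp (complex_of_real (2 * pi) * \<i> * complex_of_real \<xi> * z))" .
  qed
qed

lemma window_repr:
  assumes sq: "square_integrable_on \<phi> UNIV" and cs: "compactly_supported \<phi>"
    and nz: "\<not> (AE t in lebesgue. \<phi> t = 0)"
  obtains \<phi>b R where "integrable lborel \<phi>b" "\<And>t. R < \<bar>t\<bar> \<Longrightarrow> \<phi>b t = 0"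
    "\<not> (AE t in lborel. \<phi>b t = 0)" "AE t in lborel. \<phi> t = \<phi>b t"
proof -
  have \<phi>m[measurable]: "\<phi> \<in> borel_measurable lebesgue"
    using sq unfolding square_integrable_on_def set_borel_measurable_def by simp
  have sqi: "integrable lebesgue (\<lambda>x. (cmod (\<phi> x))\<^sup>2)"
    using sq unfolding square_integrable_on_def set_integrable_def by simp
  obtain R where R: "AE t in lebesgue. R < \<bar>t\<bar> \<longrightarrow> \<phi> t = 0"
    using cs by (auto simp: compactly_supported_def)
  obtain \<phi>0 where \<phi>0: "\<phi>0 \<in> borel_measurable borel" "AE x in lborel. \<phi> x = \<phi>0 x"
    using borel_version[OF \<phi>m] by blast
  note \<phi>0(1)[measurable]
  define \<phi>b where "\<phi>b t = indicator {-R..R} t *\<^sub>R \<phi>0 t" for t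
  have \<phi>bm[measurable]: "\<phi>b \<in> borel_measurable borel" unfolding \<phi>b_def by measurable
  have ae: "AE t in lborel. \<phi> t = \<phi>b t"
    using \<phi>0(2) R[unfolded AE_completion_iff] by eventually_elim (auto simp: \<phi>b_def indicator_def)
  have sq0: "integrable lborel (\<lambda>x. (cmod (\<phi>0 x))\<^sup>2)"
  proof -
    have "integrable lebesgue (\<lambda>x. (cmod (\<phi>0 x))\<^sup>2)"
    proof (subst integrable_cong_AE[where g="\<lambda>x. (cmod (\<phi> x))\<^sup>2"])
      show "(\<lambda>x. (cmod (\<phi>0 x))\<^sup>2) \<in> borel_measurable lebesgue" by (intro measurable_completion) measurable
      show "(\<lambda>x. (cmod (\<phi> x))\<^sup>2) \<in> borel_measurable lebesgue" by measurable
      show "AE x in lebesgue. (cmod (\<phi>0 x))\<^sup>2 = (cmod (\<phi> x))\<^sup>2"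
        using \<phi>0(2) unfolding AE_completion_iff by eventually_elim simp
    qed (rule sqi)
    then show ?thesis by (subst (asm) integrable_completion) measurable
  qed
  have \<phi>bi: "integrable lborel \<phi>b"
  proof (rule Bochner_Integration.integrable_bound[where f="\<lambda>x. indicator {-R..R} x + indicator {-R..R} x *\<^sub>R (cmod (\<phi>0 x))\<^sup>2"])
    have "integrable lborel (\<lambda>x. indicator {-R..R} x *\<^sub>R (cmod (\<phi>0 x))\<^sup>2)"
      using sq0 by (intro integrable_mult_indicator) auto
    then show "integrable lborel (\<lambda>x. indicator {-R..R} x + indicator {-R..R} x *\<^sub>R (cmod (\<phi>0 x))\<^sup>2 :: real)"
      by (intro Bochner_Integration.integrable_add) (auto simp: emeasure_lborel_Icc_eq)
    show "\<phi>b \<in> borel_measurable lborel" by measurable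
    show "AE x in lborel. norm (\<phi>b x) \<le> norm (indicator {-R..R} x + indicator {-R..R} x *\<^sub>R (cmod (\<phi>0 x))\<^sup>2 :: real)"
      by (intro AE_I2) (auto simp: \<phi>b_def indicator_def le_one_plus_sq)
  qed
  show ?thesis
  proof (rule that[OF \<phi>bi _ _ ae])
    show "R < \<bar>t\<bar> \<Longrightarrow> \<phi>b t = 0" for t by (auto simp: \<phi>b_def indicator_def)
    show "\<not> (AE t in lborel. \<phi>b t = 0)"
    proof
      assume "AE t in lborel. \<phi>b t = 0"
      with ae have "AE t in lborel. \<phi> t = 0" by eventually_elim simp
      with nz show False by (simp add: AE_completion_iff)
    qed
  qed
qed

lemma stft_repr:
  assumes ae: "AE t in lborel. \<phi> t = \<phi>b t" and [measurable]: "\<phi>b \<in> borel_measurable borel" "h \<in> borel_measurable borel"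
  shows "stft \<phi> h x \<omega> = (LBINT t. h t * cnj (\<phi>b (t - x)) * exp (complex_of_real (- 2 * pi) * \<i> * complex_of_real t * complex_of_real \<omega>))"
proof -
  have ae2: "AE t in lborel. \<phi> (t - x) = \<phi>b (t - x)"
    using AE_lborel_translate[OF ae, of "-x"] by simp
  have gm: "(\<lambda>t. h t * cnj (\<phi>b (t - x)) * exp (complex_of_real (- 2 * pi) * \<i> * complex_of_real t * complex_of_real \<omega>))
      \<in> borel_measurable lborel" by measurable
  have aeq: "AE t in lborel. h t * cnj (\<phi> (t - x)) * exp (complex_of_real (- 2 * pi) * \<i> * complex_of_real t * complex_of_real \<omega>)
      = h t * cnj (\<phi>b (t - x)) * exp (complex_of_real (- 2 * pi) * \<i> * complex_of_real t * complex_of_real \<omega>)"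
    using ae2 by eventually_elim simp
  have fm: "(\<lambda>t. h t * cnj (\<phi> (t - x)) * exp (complex_of_real (- 2 * pi) * \<i> * complex_of_real t * complex_of_real \<omega>))
      \<in> borel_measurable lebesgue"
    by (rule completion_measurable_AE[OF gm aeq])
  have "stft \<phi> h x \<omega> = (LINT t|lebesgue. h t * cnj (\<phi>b (t - x)) * exp (complex_of_real (- 2 * pi) * \<i> * complex_of_real t * complex_of_real \<omega>))"
    unfolding stft_def
    by (rule integral_cong_AE[OF fm measurable_completion[OF gm]]) (use aeq in \<open>simp add: AE_completion_iff\<close>)
  also have "\<dots> = (LBINT t. h t * cnj (\<phi>b (t - x)) * exp (complex_of_real (- 2 * pi) * \<i> * complex_of_real t * complex_of_real \<omega>))"
    by (rule integral_completion[OF gm])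
  finally show ?thesis .
qed

definition E :: "real \<Rightarrow> real \<Rightarrow> complex" where
  "E t \<omega> = exp (complex_of_real (- 2 * pi) * \<i> * complex_of_real t * complex_of_real \<omega>)"

lemma E_measurable[measurable]: "(\<lambda>t. E t \<omega>) \<in> borel_measurable borel"
  unfolding E_def by measurable
lemma E_measurable2[measurable]: "(\<lambda>\<omega>. E t \<omega>) \<in> borel_measurable borel"
  unfolding E_def by measurable
lemma E_add: "E a \<omega> * E b \<omega> = E (a + b) \<omega>"
  unfolding E_def by (simp add: exp_add[symmetric] algebra_simps)
lemma E_cnj: "cnj (E a \<omega>) = E (- a) \<omega>"
  unfolding E_def by (simp add: exp_cnj)
lemma E_0[simp]: "E 0 \<omega> = 1" by (simp add: E_def)
lemma norm_E[simp]: "norm (E a \<omega>) = 1"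
proof -
  have "complex_of_real (- 2 * pi) * \<i> * complex_of_real a * complex_of_real \<omega> = \<i> * complex_of_real (- 2 * pi * a * \<omega>)"
    by simp
  then show ?thesis unfolding E_def by (simp only: norm_exp_i_times)
qed
lemma FT_E: "FT h \<omega> = (LBINT t. h t * E t \<omega>)"
  by (simp add: FT_def E_def)

lemma conv_integrable:
  fixes a b :: "real \<Rightarrow> complex" and k :: "real \<Rightarrow> real \<Rightarrow> complex"
  assumes a: "integrable lborel a" and b: "integrable lborel b"
    and km: "(\<lambda>(x,y). k x y) \<in> borel_measurable (lborel \<Otimes>\<^sub>M lborel)"
    and kb: "\<And>x y. norm (k x y) \<le> C"
  shows "integrable (lborel \<Otimes>\<^sub>M lborel) (\<lambda>(x,y). a x * b (x - y) * k x y)"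
proof (rule integrableI_bounded)
  have [measurable]: "a \<in> borel_measurable borel" "b \<in> borel_measurable borel" using a b by auto
  note km[measurable]
  show m: "(\<lambda>(x,y). a x * b (x - y) * k x y) \<in> borel_measurable (lborel \<Otimes>\<^sub>M lborel)" by measurable
  have C0: "0 \<le> C" using kb[of 0 0] norm_ge_zero order_trans by blast
  have "(\<integral>\<^sup>+ p. ennreal (norm ((\<lambda>(x,y). a x * b (x - y) * k x y) p)) \<partial>(lborel \<Otimes>\<^sub>M lborel))
      = (\<integral>\<^sup>+ x. \<integral>\<^sup>+ y. ennreal (norm (a x * b (x - y) * k x y)) \<partial>lborel \<partial>lborel)"
    by (subst lborel.nn_integral_fst[symmetric]) (use m in \<open>auto simp: case_prod_beta\<close>)
  also have "\<dots> \<le> (\<integral>\<^sup>+ x. \<integral>\<^sup>+ y. ennreal (norm (a x)) * ennreal (norm (b (x - y))) * ennreal C \<partial>lborel \<partial>lborel)"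
  proof (intro nn_integral_mono)
    fix x y
    have "norm (a x * b (x - y) * k x y) \<le> norm (a x) * norm (b (x - y)) * C"
      by (simp add: norm_mult mult_left_mono kb)
    then show "ennreal (norm (a x * b (x - y) * k x y)) \<le> ennreal (norm (a x)) * ennreal (norm (b (x - y))) * ennreal C"
      by (simp add: ennreal_mult[symmetric] C0)
  qed
  also have "\<dots> = (\<integral>\<^sup>+ x. ennreal (norm (a x)) * ((\<integral>\<^sup>+ y. ennreal (norm (b y)) \<partial>lborel) * ennreal C) \<partial>lborel)"
  proof (intro nn_integral_cong)
    fix x
    have "(\<integral>\<^sup>+ y. ennreal (norm (a x)) * ennreal (norm (b (x - y))) * ennreal C \<partial>lborel)
        = ennreal (norm (a x)) * ((\<integral>\<^sup>+ y. ennreal (norm (b (x - y))) \<partial>lborel) * ennreal C)"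
      by (simp add: nn_integral_cmult nn_integral_multc mult.assoc)
    also have "(\<integral>\<^sup>+ y. ennreal (norm (b (x - y))) \<partial>lborel) = (\<integral>\<^sup>+ y. ennreal (norm (b y)) \<partial>lborel)"
      using nn_integral_real_affine[of "\<lambda>y. ennreal (norm (b y))" "-1" x] by simp
    finally show "(\<integral>\<^sup>+ y. ennreal (norm (a x)) * ennreal (norm (b (x - y))) * ennreal C \<partial>lborel)
        = ennreal (norm (a x)) * ((\<integral>\<^sup>+ y. ennreal (norm (b y)) \<partial>lborel) * ennreal C)" .
  qed
  also have "\<dots> = (\<integral>\<^sup>+ x. ennreal (norm (a x)) \<partial>lborel) * ((\<integral>\<^sup>+ y. ennreal (norm (b y)) \<partial>lborel) * ennreal C)"
    by (simp add: nn_integral_multc)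
  also have "\<dots> < \<infinity>"
    using a b unfolding integrable_iff_bounded by (simp add: ennreal_mult_less_top)
  finally show "(\<integral>\<^sup>+ p. ennreal (norm ((\<lambda>(x,y). a x * b (x - y) * k x y) p)) \<partial>(lborel \<Otimes>\<^sub>M lborel)) < \<infinity>" .
qed

definition autoc :: "(real \<Rightarrow> complex) \<Rightarrow> real \<Rightarrow> complex" where
  "autoc h s = (LBINT t. h t * cnj (h (t - s)))"

lemma autoc_integrable:
  assumes h: "integrable lborel h"
  shows "integrable lborel (autoc h)"
proof -
  have [measurable]: "h \<in> borel_measurable borel" using h by auto
  have "integrable (lborel \<Otimes>\<^sub>M lborel) (\<lambda>(x,y). h x * cnj (h (x - y)) * 1)"
    by (rule conv_integrable[where C=1]) (use h in auto)
  from lborel_pair.integrable_product_swap[OF this]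
  have "integrable (lborel \<Otimes>\<^sub>M lborel) (\<lambda>(y,x). h x * cnj (h (x - y)))" by (simp add: case_prod_beta)
  from lborel_pair.integrable_fst[OF this] show ?thesis unfolding autoc_def[abs_def] .
qed

lemma FT_sq:
  assumes h: "integrable lborel h"
  shows "complex_of_real ((cmod (FT h \<omega>))\<^sup>2) = FT (autoc h) \<omega>"
proof -
  have [measurable]: "h \<in> borel_measurable borel" using h by auto
  have hE: "integrable lborel (\<lambda>t. h t * E t \<omega>)"
    by (rule Bochner_Integration.integrable_bound[OF h]) (auto simp: norm_mult)
  have c1: "cnj (FT h \<omega>) = (LBINT u. cnj (h u) * E (- u) \<omega>)"
    unfolding FT_E by (subst Bochner_Integration.integral_cnj[symmetric]) (simp add: E_cnj)
  have c2: "cnj (FT h \<omega>) = (LBINT s. cnj (h (t - s)) * E (s - t) \<omega>)" for t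
    unfolding c1 using lborel_integral_real_affine[of "-1" "\<lambda>u. cnj (h u) * E (- u) \<omega>" t] by simp
  have int: "integrable (lborel \<Otimes>\<^sub>M lborel) (\<lambda>(t,s). h t * cnj (h (t - s)) * E s \<omega>)"
    by (rule conv_integrable[where C=1]) (use h in auto)
  have "complex_of_real ((cmod (FT h \<omega>))\<^sup>2) = FT h \<omega> * cnj (FT h \<omega>)"
    by (rule complex_norm_square)
  also have "\<dots> = (LBINT t. h t * E t \<omega> * cnj (FT h \<omega>))"
    unfolding FT_E by simp
  also have "\<dots> = (LBINT t. LBINT s. h t * cnj (h (t - s)) * E s \<omega>)"
  proof (intro Bochner_Integration.integral_cong refl)
    fix t
    have "h t * E t \<omega> * cnj (FT h \<omega>) = (LBINT s. h t * E t \<omega> * (cnj (h (t - s)) * E (s - t) \<omega>))"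
      by (subst c2[of t]) simp
    also have "\<dots> = (LBINT s. h t * cnj (h (t - s)) * E s \<omega>)"
    proof (intro Bochner_Integration.integral_cong refl)
      fix s
      have "E t \<omega> * E (s - t) \<omega> = E s \<omega>" by (simp add: E_add)
      then show "h t * E t \<omega> * (cnj (h (t - s)) * E (s - t) \<omega>) = h t * cnj (h (t - s)) * E s \<omega>"
        by (metis mult.assoc mult.commute)
    qed
    finally show "h t * E t \<omega> * cnj (FT h \<omega>) = (LBINT s. h t * cnj (h (t - s)) * E s \<omega>)" .
  qed
  also have "\<dots> = (LBINT s. LBINT t. h t * cnj (h (t - s)) * E s \<omega>)"
    using lborel_pair.Fubini_integral[OF int] by simp
  also have "\<dots> = (LBINT s. autoc h s * E s \<omega>)"
    unfolding autoc_def by simp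
  also have "\<dots> = FT (autoc h) \<omega>" by (simp add: FT_E)
  finally show ?thesis .
qed

lemma E_meas2[measurable]:
  assumes [measurable]: "f \<in> borel_measurable M" "g \<in> borel_measurable M"
  shows "(\<lambda>x. E (f x) (g x)) \<in> borel_measurable M"
  unfolding E_def by measurable

lemma E_sym: "E a b = E b a" unfolding E_def by (simp add: algebra_simps)
lemma E_neg: "E (- a) b = E a (- b)" unfolding E_def by (simp add: algebra_simps)

lemma prod_integrable:
  fixes a b :: "real \<Rightarrow> complex" and k :: "real \<Rightarrow> real \<Rightarrow> complex"
  assumes a: "integrable lborel a" and b: "integrable lborel b"
    and km: "(\<lambda>(x,y). k x y) \<in> borel_measurable (lborel \<Otimes>\<^sub>M lborel)"
    and kb: "\<And>x y. norm (k x y) \<le> C"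
  shows "integrable (lborel \<Otimes>\<^sub>M lborel) (\<lambda>(x,y). a x * b y * k x y)"
proof (rule integrableI_bounded)
  have [measurable]: "a \<in> borel_measurable borel" "b \<in> borel_measurable borel" using a b by auto
  note km[measurable]
  show m: "(\<lambda>(x,y). a x * b y * k x y) \<in> borel_measurable (lborel \<Otimes>\<^sub>M lborel)" by measurable
  have C0: "0 \<le> C" using kb[of 0 0] norm_ge_zero order_trans by blast
  have "(\<integral>\<^sup>+ p. ennreal (norm ((\<lambda>(x,y). a x * b y * k x y) p)) \<partial>(lborel \<Otimes>\<^sub>M lborel))
      = (\<integral>\<^sup>+ x. \<integral>\<^sup>+ y. ennreal (norm (a x * b y * k x y)) \<partial>lborel \<partial>lborel)"
    by (subst lborel.nn_integral_fst[symmetric]) (use m in \<open>auto simp: case_prod_beta\<close>)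
  also have "\<dots> \<le> (\<integral>\<^sup>+ x. \<integral>\<^sup>+ y. ennreal (norm (a x)) * ennreal (norm (b y)) * ennreal C \<partial>lborel \<partial>lborel)"
  proof (intro nn_integral_mono)
    fix x y
    have "norm (a x * b y * k x y) \<le> norm (a x) * norm (b y) * C"
      by (simp add: norm_mult mult_left_mono kb)
    then show "ennreal (norm (a x * b y * k x y)) \<le> ennreal (norm (a x)) * ennreal (norm (b y)) * ennreal C"
      by (simp add: ennreal_mult[symmetric] C0)
  qed
  also have "\<dots> = (\<integral>\<^sup>+ x. ennreal (norm (a x)) * ((\<integral>\<^sup>+ y. ennreal (norm (b y)) \<partial>lborel) * ennreal C) \<partial>lborel)"
    by (intro nn_integral_cong) (simp add: nn_integral_cmult nn_integral_multc mult.assoc)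
  also have "\<dots> = (\<integral>\<^sup>+ x. ennreal (norm (a x)) \<partial>lborel) * ((\<integral>\<^sup>+ y. ennreal (norm (b y)) \<partial>lborel) * ennreal C)"
    by (simp add: nn_integral_multc)
  also have "\<dots> < \<infinity>"
    using a b unfolding integrable_iff_bounded by (simp add: ennreal_mult_less_top)
  finally show "(\<integral>\<^sup>+ p. ennreal (norm ((\<lambda>(x,y). a x * b y * k x y) p)) \<partial>(lborel \<Otimes>\<^sub>M lborel)) < \<infinity>" .
qed

definition pw :: "(real \<Rightarrow> complex) \<Rightarrow> complex \<Rightarrow> complex" where
  "pw F z = (LBINT \<xi>. F \<xi> * exp (complex_of_real (2 * pi) * \<i> * complex_of_real \<xi> * z))"
definition pws :: "(real \<Rightarrow> complex) \<Rightarrow> complex \<Rightarrow> complex" where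
  "pws F z = (LBINT \<xi>. cnj (F \<xi>) * exp (complex_of_real (- 2 * pi) * \<i> * complex_of_real \<xi> * z))"

locale pwf =
  fixes F :: "real \<Rightarrow> complex" and B :: real
  assumes F_int: "integrable lborel F" and F_supp: "\<And>\<xi>. B < \<bar>\<xi>\<bar> \<Longrightarrow> F \<xi> = 0"
begin

definition fr :: "real \<Rightarrow> complex" where "fr t = pw F (complex_of_real t)"

lemma F_meas[measurable]: "F \<in> borel_measurable borel" using F_int by auto

lemma pw_holo: "pw F holomorphic_on UNIV"
  unfolding pw_def[abs_def] by (rule holo_FT[OF F_int F_supp])

lemma pws_holo: "pws F holomorphic_on UNIV"
  unfolding pws_def[abs_def] by (rule holo_FT) (use F_int F_supp in auto)

lemma pws_real: "pws F (complex_of_real r) = cnj (fr r)"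
  unfolding pws_def fr_def pw_def
  by (subst Bochner_Integration.integral_cnj[symmetric]) (simp add: exp_cnj)

lemma fr_E: "fr t = (LBINT \<xi>. F \<xi> * E \<xi> (- t))"
  unfolding fr_def pw_def E_def by (simp add: algebra_simps)

definition NF where "NF = (LBINT \<xi>. norm (F \<xi>))"

lemma fr_bound: "norm (fr t) \<le> NF"
proof -
  have "norm (fr t) \<le> (LBINT \<xi>. norm (F \<xi> * E \<xi> (- t)))"
    unfolding fr_E by (rule integral_norm_bound)
  then show ?thesis by (simp add: norm_mult NF_def)
qed

lemma NF_nonneg: "0 \<le> NF" unfolding NF_def by simp

lemma fr_cont: "continuous_on UNIV fr"
proof -
  have "continuous_on UNIV (pw F \<circ> complex_of_real)"
    by (intro continuous_on_compose continuous_intros holomorphic_on_imp_continuous_on[OF pw_holo, THEN continuous_on_subset]) auto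
  then show ?thesis by (simp add: fr_def[abs_def] comp_def)
qed

lemma fr_meas[measurable]: "fr \<in> borel_measurable borel"
  by (rule borel_measurable_continuous_onI[OF fr_cont])

definition D :: "real \<Rightarrow> real \<Rightarrow> complex" where
  "D s \<nu> = (LBINT \<xi>. F \<xi> * cnj (F (\<xi> - \<nu>)) * E (\<xi> - \<nu>) (- s))"

lemma q_repr:
  shows "integrable lborel (D s)"
    and "fr t * cnj (fr (t - s)) = (LBINT \<nu>. D s \<nu> * E \<nu> (- t))"
proof -
  have int: "integrable (lborel \<Otimes>\<^sub>M lborel) (\<lambda>(\<xi>,\<nu>). F \<xi> * cnj (F (\<xi> - \<nu>)) * (E (\<xi> - \<nu>) (- s) * E \<nu> (- t)))"
    by (rule conv_integrable[where C=1]) (use F_int in \<open>auto simp: norm_mult\<close>)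
  have int0: "integrable (lborel \<Otimes>\<^sub>M lborel) (\<lambda>(\<xi>,\<nu>). F \<xi> * cnj (F (\<xi> - \<nu>)) * E (\<xi> - \<nu>) (- s))"
    by (rule conv_integrable[where C=1]) (use F_int in \<open>auto simp: norm_mult\<close>)
  from lborel_pair.integrable_fst[OF lborel_pair.integrable_product_swap[OF int0]]
  show "integrable lborel (D s)" unfolding D_def[abs_def] by (simp add: case_prod_beta)
  have c1: "cnj (fr (t - s)) = (LBINT \<nu>. cnj (F (\<xi> - \<nu>)) * E (\<xi> - \<nu>) (t - s))" for \<xi>
  proof -
    have "cnj (fr (t - s)) = (LBINT \<eta>. cnj (F \<eta>) * E \<eta> (t - s))"
      unfolding fr_E by (subst Bochner_Integration.integral_cnj[symmetric]) (simp add: E_cnj E_neg)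
    also have "\<dots> = (LBINT \<nu>. cnj (F (\<xi> - \<nu>)) * E (\<xi> - \<nu>) (t - s))"
      using lborel_integral_real_affine[of "-1" "\<lambda>\<eta>. cnj (F \<eta>) * E \<eta> (t - s)" \<xi>] by simp
    finally show ?thesis .
  qed
  have "fr t * cnj (fr (t - s)) = (LBINT \<xi>. F \<xi> * E \<xi> (- t) * cnj (fr (t - s)))"
    unfolding fr_E[of t] by simp
  also have "\<dots> = (LBINT \<xi>. LBINT \<nu>. F \<xi> * cnj (F (\<xi> - \<nu>)) * (E (\<xi> - \<nu>) (- s) * E \<nu> (- t)))"
  proof (intro Bochner_Integration.integral_cong refl)
    fix \<xi>
    show "F \<xi> * E \<xi> (- t) * cnj (fr (t - s)) = (LBINT \<nu>. F \<xi> * cnj (F (\<xi> - \<nu>)) * (E (\<xi> - \<nu>) (- s) * E \<nu> (- t)))"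
    proof -
      have "F \<xi> * E \<xi> (- t) * cnj (fr (t - s)) = (LBINT \<nu>. F \<xi> * E \<xi> (- t) * (cnj (F (\<xi> - \<nu>)) * E (\<xi> - \<nu>) (t - s)))"
        unfolding c1[of \<xi>] by simp
      also have "\<dots> = (LBINT \<nu>. F \<xi> * cnj (F (\<xi> - \<nu>)) * (E (\<xi> - \<nu>) (- s) * E \<nu> (- t)))"
      proof (intro Bochner_Integration.integral_cong refl)
        fix \<nu>
        have "E \<xi> (- t) * E (\<xi> - \<nu>) (t - s) = E (\<xi> - \<nu>) (- s) * E \<nu> (- t)"
          unfolding E_def by (simp add: exp_add[symmetric] algebra_simps)
        then show "F \<xi> * E \<xi> (- t) * (cnj (F (\<xi> - \<nu>)) * E (\<xi> - \<nu>) (t - s)) = F \<xi> * cnj (F (\<xi> - \<nu>)) * (E (\<xi> - \<nu>) (- s) * E \<nu> (- t))"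
          by (simp add: mult.assoc mult.left_commute)
      qed
      finally show ?thesis .
    qed
  qed
  also have "\<dots> = (LBINT \<nu>. LBINT \<xi>. F \<xi> * cnj (F (\<xi> - \<nu>)) * (E (\<xi> - \<nu>) (- s) * E \<nu> (- t)))"
    using lborel_pair.Fubini_integral[OF int] by simp
  also have "\<dots> = (LBINT \<nu>. D s \<nu> * E \<nu> (- t))"
  proof (intro Bochner_Integration.integral_cong refl)
    fix \<nu>
    show "(LBINT \<xi>. F \<xi> * cnj (F (\<xi> - \<nu>)) * (E (\<xi> - \<nu>) (- s) * E \<nu> (- t))) = D s \<nu> * E \<nu> (- t)"
      unfolding D_def integral_mult_left_zero[symmetric] by (simp add: mult.assoc)
  qed
  finally show "fr t * cnj (fr (t - s)) = (LBINT \<nu>. D s \<nu> * E \<nu> (- t))" .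
qed

end

lemma countable_real_zeros:
  fixes H :: "complex \<Rightarrow> complex"
  assumes holo: "H holomorphic_on UNIV" and nz: "H (complex_of_real \<nu>0) \<noteq> 0"
  shows "countable {\<nu>::real. H (complex_of_real \<nu>) = 0}"
proof -
  have cZ: "countable {z. H z = 0}"
  proof (cases "H constant_on UNIV")
    case True
    then have "{z. H z = 0} = {}" using nz by (auto simp: constant_on_def)
    then show ?thesis by simp
  next
    case False
    from holomorphic_countable_zeros[OF holo open_UNIV connected_UNIV fsigma_UNIV False]
    show ?thesis by simp
  qed
  have "complex_of_real ` {\<nu>::real. H (complex_of_real \<nu>) = 0} \<subseteq> {z. H z = 0}" by auto
  then have "countable (complex_of_real ` {\<nu>::real. H (complex_of_real \<nu>) = 0})"
    using cZ countable_subset by blast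
  then show ?thesis by (rule countable_image_inj_on) (auto intro: inj_onI)
qed

lemma deconv:
  fixes \<Delta> W :: "real \<Rightarrow> complex"
  assumes \<Delta>i: "integrable lborel \<Delta>" and Wi: "integrable lborel W"
    and Wsupp: "\<And>u. M < \<bar>u\<bar> \<Longrightarrow> W u = 0" and Wnz: "\<not> (AE u in lborel. W u = 0)"
    and z: "\<And>x. (LBINT t. (LBINT \<nu>. \<Delta> \<nu> * E \<nu> (- t)) * W (t - x)) = 0"
  shows "AE \<nu> in lborel. \<Delta> \<nu> = 0"
proof -
  have [measurable]: "\<Delta> \<in> borel_measurable borel" "W \<in> borel_measurable borel" using \<Delta>i Wi by auto
  define H where "H z = (LBINT u. W u * exp (complex_of_real (2 * pi) * \<i> * complex_of_real u * z))" for z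
  define Wh where "Wh \<nu> = (LBINT u. W u * E \<nu> (- u))" for \<nu>
  have HW: "H (complex_of_real \<nu>) = Wh \<nu>" for \<nu>
    unfolding H_def Wh_def E_def by (simp add: algebra_simps)
  have Hholo: "H holomorphic_on UNIV"
    unfolding H_def[abs_def] by (rule holo_FT[OF Wi Wsupp])
  have Whc: "continuous_on UNIV Wh"
  proof -
    have "continuous_on UNIV (H \<circ> complex_of_real)"
      by (intro continuous_on_compose continuous_intros holomorphic_on_imp_continuous_on[OF Hholo, THEN continuous_on_subset]) auto
    then show ?thesis by (simp add: comp_def HW)
  qed
  have Whm[measurable]: "Wh \<in> borel_measurable borel" by (rule borel_measurable_continuous_onI[OF Whc])
  have Whb: "norm (Wh \<nu>) \<le> (LBINT u. norm (W u))" for \<nu>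
  proof -
    have "norm (Wh \<nu>) \<le> (LBINT u. norm (W u * E \<nu> (- u)))" unfolding Wh_def by (rule integral_norm_bound)
    then show ?thesis by (simp add: norm_mult)
  qed
  have WhFT: "Wh \<nu> = FT W (- \<nu>)" for \<nu>
    unfolding Wh_def FT_E by (simp add: E_sym[of \<nu>] E_neg)
  have \<Delta>Wh: "integrable lborel (\<lambda>\<nu>. \<Delta> \<nu> * Wh \<nu>)"
  proof (rule Bochner_Integration.integrable_bound[where f="\<lambda>\<nu>. (LBINT u. norm (W u)) * \<Delta> \<nu>"])
    show "integrable lborel (\<lambda>\<nu>. (LBINT u. norm (W u)) * \<Delta> \<nu>)" using \<Delta>i by simp
    show "(\<lambda>\<nu>. \<Delta> \<nu> * Wh \<nu>) \<in> borel_measurable lborel" by measurable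
    show "AE \<nu> in lborel. norm (\<Delta> \<nu> * Wh \<nu>) \<le> norm ((LBINT u. norm (W u)) * \<Delta> \<nu>)"
    proof (intro AE_I2)
      fix \<nu>
      have "norm (\<Delta> \<nu>) * norm (Wh \<nu>) \<le> norm (\<Delta> \<nu>) * (LBINT u. norm (W u))"
        by (intro mult_left_mono Whb) auto
      then show "norm (\<Delta> \<nu> * Wh \<nu>) \<le> norm ((LBINT u. norm (W u)) * \<Delta> \<nu>)"
        by (simp add: norm_mult mult.commute)
    qed
  qed
  have FT0: "FT (\<lambda>\<nu>. \<Delta> \<nu> * Wh \<nu>) \<omega> = 0" for \<omega>
  proof -
    define x where "x = - \<omega>"
    have Wx: "integrable lborel (\<lambda>t. W (t - x))"
      using lborel_integrable_real_affine_iff[of 1 W "- x"] Wi by simp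
    have int: "integrable (lborel \<Otimes>\<^sub>M lborel) (\<lambda>(t,\<nu>). W (t - x) * \<Delta> \<nu> * E \<nu> (- t))"
    proof (rule prod_integrable[OF Wx \<Delta>i, where C=1])
      have "(\<lambda>p::real\<times>real. E (snd p) (- fst p)) \<in> borel_measurable (lborel \<Otimes>\<^sub>M lborel)"
        by (intro E_meas2 borel_measurable_uminus measurable_fst'' measurable_snd'') auto
      then show "(\<lambda>(t,\<nu>). E \<nu> (- t)) \<in> borel_measurable (lborel \<Otimes>\<^sub>M lborel)"
        by (simp add: case_prod_beta')
    qed simp
    have "0 = (LBINT t. (LBINT \<nu>. \<Delta> \<nu> * E \<nu> (- t)) * W (t - x))" using z[of x] by simp
    also have "\<dots> = (LBINT t. LBINT \<nu>. W (t - x) * \<Delta> \<nu> * E \<nu> (- t))"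
    proof (intro Bochner_Integration.integral_cong refl)
      fix t
      have "(LBINT \<nu>. \<Delta> \<nu> * E \<nu> (- t)) * W (t - x) = (LBINT \<nu>. \<Delta> \<nu> * E \<nu> (- t) * W (t - x))"
        by (rule integral_mult_left_zero[symmetric])
      then show "(LBINT \<nu>. \<Delta> \<nu> * E \<nu> (- t)) * W (t - x) = (LBINT \<nu>. W (t - x) * \<Delta> \<nu> * E \<nu> (- t))"
        by (simp add: mult_ac)
    qed
    also have "\<dots> = (LBINT \<nu>. LBINT t. W (t - x) * \<Delta> \<nu> * E \<nu> (- t))"
      using lborel_pair.Fubini_integral[OF int] by simp
    also have "\<dots> = (LBINT \<nu>. \<Delta> \<nu> * Wh \<nu> * E \<nu> \<omega>)"
    proof (intro Bochner_Integration.integral_cong refl)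
      fix \<nu>
      have "(LBINT t. W (t - x) * \<Delta> \<nu> * E \<nu> (- t)) = (LBINT u. W u * \<Delta> \<nu> * E \<nu> (- (x + u)))"
        using lborel_integral_real_affine[of 1 "\<lambda>t. W (t - x) * \<Delta> \<nu> * E \<nu> (- t)" x] by simp
      also have "\<dots> = (LBINT u. \<Delta> \<nu> * E \<nu> \<omega> * (W u * E \<nu> (- u)))"
      proof (intro Bochner_Integration.integral_cong refl)
        fix u
        have "E \<nu> (- (x + u)) = E \<nu> \<omega> * E \<nu> (- u)"
          unfolding x_def E_def by (simp add: exp_add[symmetric] algebra_simps)
        then show "W u * \<Delta> \<nu> * E \<nu> (- (x + u)) = \<Delta> \<nu> * E \<nu> \<omega> * (W u * E \<nu> (- u))"
          by (simp add: mult_ac)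
      qed
      also have "\<dots> = \<Delta> \<nu> * E \<nu> \<omega> * Wh \<nu>"
        unfolding Wh_def by (rule integral_mult_right_zero)
      also have "\<dots> = \<Delta> \<nu> * Wh \<nu> * E \<nu> \<omega>" by (simp add: mult_ac)
      finally show "(LBINT t. W (t - x) * \<Delta> \<nu> * E \<nu> (- t)) = \<Delta> \<nu> * Wh \<nu> * E \<nu> \<omega>" .
    qed
    also have "\<dots> = FT (\<lambda>\<nu>. \<Delta> \<nu> * Wh \<nu>) \<omega>" by (simp add: FT_E)
    finally show ?thesis by simp
  qed
  have ae1: "AE \<nu> in lborel. \<Delta> \<nu> * Wh \<nu> = 0"
    by (rule fourier_unique[OF \<Delta>Wh FT0])
  obtain \<nu>0 where \<nu>0: "Wh \<nu>0 \<noteq> 0"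
  proof (rule ccontr)
    assume "\<not> thesis"
    with that have "\<forall>\<nu>. Wh \<nu> = 0" by blast
    then have "FT W \<omega> = 0" for \<omega> using WhFT[of "- \<omega>"] by simp
    with fourier_unique[OF Wi] Wnz show False by blast
  qed
  have "countable {\<nu>::real. H (complex_of_real \<nu>) = 0}"
    by (rule countable_real_zeros[OF Hholo]) (use \<nu>0 HW in simp)
  then have "{\<nu>. Wh \<nu> = 0} \<in> null_sets lborel"
    by (intro countable_imp_null_set_lborel) (simp add: HW)
  then have "AE \<nu> in lborel. Wh \<nu> \<noteq> 0"
    by (rule AE_I') auto
  with ae1 show ?thesis by eventually_elim simp
qed

locale setting = f: pwf F B + g: pwf G B for F G :: "real \<Rightarrow> complex" and B :: real +
  fixes \<phi> :: "real \<Rightarrow> complex" and R :: real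
  assumes \<phi>_int: "integrable lborel \<phi>" and \<phi>_supp: "\<And>t. R < \<bar>t\<bar> \<Longrightarrow> \<phi> t = 0"
    and \<phi>_nz: "\<not> (AE t in lborel. \<phi> t = 0)"
begin

lemma \<phi>_meas[measurable]: "\<phi> \<in> borel_measurable borel" using \<phi>_int by auto

definition W :: "real \<Rightarrow> real \<Rightarrow> complex" where "W s u = cnj (\<phi> u) * \<phi> (u - s)"
definition qf :: "real \<Rightarrow> real \<Rightarrow> complex" where "qf s t = f.fr t * cnj (f.fr (t - s))"
definition qg :: "real \<Rightarrow> real \<Rightarrow> complex" where "qg s t = g.fr t * cnj (g.fr (t - s))"
definition hf :: "real \<Rightarrow> real \<Rightarrow> complex" where "hf x t = f.fr t * cnj (\<phi> (t - x))"
definition hg :: "real \<Rightarrow> real \<Rightarrow> complex" where "hg x t = g.fr t * cnj (\<phi> (t - x))"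
definition \<Phi> :: "real \<Rightarrow> real \<Rightarrow> complex" where "\<Phi> s x = (LBINT t. (qf s t - qg s t) * W s (t - x))"

lemma W_meas[measurable]: "W s \<in> borel_measurable borel" unfolding W_def[abs_def] by measurable
lemma qf_meas[measurable]: "qf s \<in> borel_measurable borel" unfolding qf_def[abs_def] by measurable
lemma qg_meas[measurable]: "qg s \<in> borel_measurable borel" unfolding qg_def[abs_def] by measurable

lemma qf_bound: "norm (qf s t) \<le> f.NF * f.NF"
  unfolding qf_def norm_mult using f.fr_bound f.NF_nonneg by (simp add: mult_mono)
lemma qg_bound: "norm (qg s t) \<le> g.NF * g.NF"
  unfolding qg_def norm_mult using g.fr_bound g.NF_nonneg by (simp add: mult_mono)

lemma W_supp: "R < \<bar>u\<bar> \<Longrightarrow> W s u = 0" unfolding W_def using \<phi>_supp by simp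

lemma translate_integrable: "integrable lborel h \<Longrightarrow> integrable lborel (\<lambda>t. h (t - x))"
  for h :: "real \<Rightarrow> complex"
  using lborel_integrable_real_affine_iff[of 1 h "- x"] by simp

lemma bounded_mult_integrable:
  fixes a b :: "real \<Rightarrow> complex"
  assumes "integrable lborel b" "a \<in> borel_measurable borel" "\<And>t. norm (a t) \<le> C"
  shows "integrable lborel (\<lambda>t. a t * b t)"
proof (rule Bochner_Integration.integrable_bound[where f="\<lambda>t. C * b t"])
  show "integrable lborel (\<lambda>t. C * b t)" using assms by simp
  have [measurable]: "b \<in> borel_measurable borel" using assms by auto
  show "(\<lambda>t. a t * b t) \<in> borel_measurable lborel" using assms(2) by measurable
  have C0: "0 \<le> C" using assms(3)[of 0] norm_ge_zero order_trans by blast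
  show "AE t in lborel. norm (a t * b t) \<le> norm (C * b t)"
    using assms(3) C0 by (intro AE_I2) (simp add: norm_mult mult_right_mono)
qed

lemma hf_int: "integrable lborel (hf x)"
  unfolding hf_def[abs_def]
  by (rule bounded_mult_integrable[OF _ _ f.fr_bound]) (use translate_integrable[OF \<phi>_int] in auto)
lemma hg_int: "integrable lborel (hg x)"
  unfolding hg_def[abs_def]
  by (rule bounded_mult_integrable[OF _ _ g.fr_bound]) (use translate_integrable[OF \<phi>_int] in auto)

lemma autoc_hf: "autoc (hf x) s = (LBINT t. qf s t * W s (t - x))"
  unfolding autoc_def hf_def qf_def W_def
  by (intro Bochner_Integration.integral_cong refl) (simp add: algebra_simps)
lemma autoc_hg: "autoc (hg x) s = (LBINT t. qg s t * W s (t - x))"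
  unfolding autoc_def hg_def qg_def W_def
  by (intro Bochner_Integration.integral_cong refl) (simp add: algebra_simps)

lemma stepA:
  assumes eq: "\<And>\<omega>. cmod (FT (hf x) \<omega>) = cmod (FT (hg x) \<omega>)"
  shows "AE s in lborel. autoc (hf x) s = autoc (hg x) s"
proof -
  have i1: "integrable lborel (autoc (hf x))" by (rule autoc_integrable[OF hf_int])
  have i2: "integrable lborel (autoc (hg x))" by (rule autoc_integrable[OF hg_int])
  have ie: "integrable lborel (\<lambda>s. a s * E s \<omega>)" if "integrable lborel a" for a \<omega>
    using bounded_mult_integrable[OF that, of "\<lambda>s. E s \<omega>" 1] by (simp add: mult.commute)
  have "AE s in lborel. autoc (hf x) s - autoc (hg x) s = 0"
  proof (rule fourier_unique)
    show "integrable lborel (\<lambda>s. autoc (hf x) s - autoc (hg x) s)" using i1 i2 by simp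
    fix \<omega>
    have "FT (\<lambda>s. autoc (hf x) s - autoc (hg x) s) \<omega> = FT (autoc (hf x)) \<omega> - FT (autoc (hg x)) \<omega>"
      unfolding FT_E
      by (subst Bochner_Integration.integral_diff[OF ie[OF i1] ie[OF i2], symmetric]) (simp add: algebra_simps)
    also have "\<dots> = 0"
      using FT_sq[OF hf_int[of x], of \<omega>] FT_sq[OF hg_int[of x], of \<omega>] eq[of \<omega>] by simp
    finally show "FT (\<lambda>s. autoc (hf x) s - autoc (hg x) s) \<omega> = 0" .
  qed
  then show ?thesis by simp
qed

lemma AE_W_int: "AE s in lborel. integrable lborel (W s)"
proof -
  have "integrable (lborel \<Otimes>\<^sub>M lborel) (\<lambda>(u,s). cnj (\<phi> u) * \<phi> (u - s) * 1)"
    by (rule conv_integrable[where C=1]) (use \<phi>_int in auto)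
  from lborel_pair.AE_integrable_fst[OF lborel_pair.integrable_product_swap[OF this]]
  show ?thesis unfolding W_def[abs_def] by (simp add: case_prod_beta)
qed

lemma \<Phi>_diff:
  assumes "integrable lborel (W s)"
  shows "\<Phi> s x = autoc (hf x) s - autoc (hg x) s"
proof -
  have Wx: "integrable lborel (\<lambda>t. W s (t - x))" by (rule translate_integrable[OF assms])
  have i1: "integrable lborel (\<lambda>t. qf s t * W s (t - x))"
    by (rule bounded_mult_integrable[OF Wx _ qf_bound]) measurable
  have i2: "integrable lborel (\<lambda>t. qg s t * W s (t - x))"
    by (rule bounded_mult_integrable[OF Wx _ qg_bound]) measurable
  show ?thesis unfolding \<Phi>_def autoc_hf autoc_hg
    by (subst Bochner_Integration.integral_diff[OF i1 i2, symmetric]) (simp add: algebra_simps)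
qed

lemma \<Phi>_cont:
  assumes Wi: "integrable lborel (W s)"
  shows "continuous_on UNIV (\<Phi> s)"
proof -
  have \<Phi>2: "\<Phi> s x = (LBINT u. (qf s (x + u) - qg s (x + u)) * W s u)" for x
    unfolding \<Phi>_def using lborel_integral_real_affine[of 1 "\<lambda>t. (qf s t - qg s t) * W s (t - x)" x] by simp
  have qc: "continuous_on UNIV (\<lambda>t. qf s t - qg s t)"
    unfolding qf_def qg_def
    by (intro continuous_intros continuous_on_compose2[OF f.fr_cont] continuous_on_compose2[OF g.fr_cont]) auto
  show ?thesis
  unfolding continuous_on_eq_continuous_at[OF open_UNIV] isCont_def
  proof (intro ballI)
    fix x0 :: real
    have "((\<lambda>x. LBINT u. (qf s (x + u) - qg s (x + u)) * W s u) \<longlongrightarrow> (LBINT u. (qf s (x0 + u) - qg s (x0 + u)) * W s u)) (at x0)"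
    proof (rule tendsto_integral_at[where w="\<lambda>u. (f.NF * f.NF + g.NF * g.NF) * norm (W s u)"])
      show "integrable lborel (\<lambda>u. (f.NF * f.NF + g.NF * g.NF) * norm (W s u))" using Wi by simp
      show "AE u in lborel. ((\<lambda>x. (qf s (x + u) - qg s (x + u)) * W s u) \<longlongrightarrow> (qf s (x0 + u) - qg s (x0 + u)) * W s u) (at x0)"
      proof (intro AE_I2 tendsto_mult tendsto_const)
        fix u
        have "isCont (\<lambda>t. qf s t - qg s t) (x0 + u)"
          using qc by (simp add: continuous_on_eq_continuous_at)
        moreover have c1: "isCont (\<lambda>x. x + u) x0" by (intro continuous_intros)
        ultimately have "isCont (\<lambda>x. qf s (x + u) - qg s (x + u)) x0"
          using isCont_o2[OF c1, of "\<lambda>t. qf s t - qg s t"] by simp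
        then show "((\<lambda>x. qf s (x + u) - qg s (x + u)) \<longlongrightarrow> qf s (x0 + u) - qg s (x0 + u)) (at x0)"
          by (simp add: isCont_def)
      qed
      show "\<forall>\<^sub>F x in at x0. AE u in lborel. norm ((qf s (x + u) - qg s (x + u)) * W s u) \<le> (f.NF * f.NF + g.NF * g.NF) * norm (W s u)"
      proof (intro always_eventually allI AE_I2)
        fix x u
        have "norm (qf s (x + u) - qg s (x + u)) \<le> f.NF * f.NF + g.NF * g.NF"
          using norm_triangle_ineq4[of "qf s (x + u)" "qg s (x + u)"] qf_bound[of s "x + u"] qg_bound[of s "x + u"] by simp
        then show "norm ((qf s (x + u) - qg s (x + u)) * W s u) \<le> (f.NF * f.NF + g.NF * g.NF) * norm (W s u)"
          by (simp add: norm_mult mult_right_mono)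
      qed
    qed measurable
    then show "((\<Phi> s) \<longlongrightarrow> \<Phi> s x0) (at x0)" by (simp add: \<Phi>2[abs_def])
  qed
qed

lemma stepB:
  assumes Wi: "integrable lborel (W s)" and Wnz: "\<not> (AE u in lborel. W s u = 0)"
    and z: "\<And>x. \<Phi> s x = 0"
  shows "qf s t = qg s t"
proof -
  define \<Delta> where "\<Delta> \<nu> = f.D s \<nu> - g.D s \<nu>" for \<nu>
  have fi: "integrable lborel (f.D s)" and gi: "integrable lborel (g.D s)"
    using f.q_repr(1) g.q_repr(1) by auto
  have \<Delta>i: "integrable lborel \<Delta>" unfolding \<Delta>_def[abs_def] using fi gi by simp
  have ie: "integrable lborel (\<lambda>\<nu>. a \<nu> * E \<nu> \<omega>)" if "integrable lborel a" for a \<omega>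
    using bounded_mult_integrable[OF that, of "\<lambda>\<nu>. E \<nu> \<omega>" 1] by (simp add: mult.commute)
  have qd: "qf s t - qg s t = (LBINT \<nu>. \<Delta> \<nu> * E \<nu> (- t))" for t
    unfolding qf_def qg_def f.q_repr(2) g.q_repr(2) \<Delta>_def
    by (subst Bochner_Integration.integral_diff[OF ie[OF fi] ie[OF gi], symmetric]) (simp add: algebra_simps)
  have "AE \<nu> in lborel. \<Delta> \<nu> = 0"
  proof (rule deconv[OF \<Delta>i Wi W_supp Wnz])
    fix x
    show "(LBINT t. (LBINT \<nu>. \<Delta> \<nu> * E \<nu> (- t)) * W s (t - x)) = 0"
      using z[of x] unfolding \<Phi>_def qd .
  qed
  then have "(LBINT \<nu>. \<Delta> \<nu> * E \<nu> (- t)) = 0"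
    by (intro integral_eq_zero_AE) auto
  then show ?thesis using qd[of t] by simp
qed

end

lemma holo_zero_on_reals:
  fixes H :: "complex \<Rightarrow> complex"
  assumes holo: "H holomorphic_on UNIV" and z: "\<And>t::real. H (complex_of_real t) = 0"
  shows "H w = 0"
proof (rule analytic_continuation[OF holo open_UNIV connected_UNIV subset_UNIV UNIV_I])
  show "0 islimpt range complex_of_real"
    unfolding islimpt_approachable
  proof (intro allI impI)
    fix e :: real assume e: "0 < e"
    show "\<exists>x'\<in>range complex_of_real. x' \<noteq> 0 \<and> dist x' 0 < e"
      using e by (intro bexI[of _ "complex_of_real (e/2)"] rangeI) (auto simp: dist_norm)
  qed
  show "\<And>z. z \<in> range complex_of_real \<Longrightarrow> H z = 0" using z by auto
qed auto

lemma uncountable_limpt: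
  fixes T :: "real set"
  assumes "\<not> countable T"
  shows "\<exists>\<zeta>. \<zeta> islimpt (complex_of_real ` T)"
proof -
  obtain n :: nat where n: "infinite (T \<inter> {- real n..real n})"
  proof (rule ccontr)
    assume "\<not> thesis"
    with that have fin: "\<And>n::nat. finite (T \<inter> {- real n..real n})" by blast
    have "T = (\<Union>n::nat. T \<inter> {- real n..real n})"
    proof safe
      fix x assume "x \<in> T"
      obtain n :: nat where "\<bar>x\<bar> \<le> real n" using real_arch_simple by blast
      with \<open>x \<in> T\<close> show "x \<in> (\<Union>n::nat. T \<inter> {- real n..real n})" by (intro UN_I[of n]) auto
    qed
    also have "countable \<dots>" using fin by (intro countable_UN) (auto intro: countable_finite)
    finally show False using assms by simp
  qed
  let ?A = "complex_of_real ` (T \<inter> {- real n..real n})"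
  have "inj_on complex_of_real (T \<inter> {- real n..real n})" by (auto intro: inj_onI)
  then have "infinite ?A" using n finite_imageD by blast
  moreover have "?A \<subseteq> cball 0 (real n)" by auto
  ultimately obtain \<zeta> where "\<zeta> islimpt ?A"
    using Heine_Borel_imp_Bolzano_Weierstrass[OF compact_cball] by blast
  then show ?thesis by (meson image_mono inf_le1 islimpt_subset)
qed

context setting
begin

lemma good_in_T:
  assumes Wi: "integrable lborel (W s)" and z: "\<forall>x\<in>\<rat>. \<Phi> s x = 0" and Wnz: "\<not> (AE u in lborel. W s u = 0)"
  shows "qf s t = qg s t"
proof (rule stepB[OF Wi Wnz])
  fix x
  have cc: "continuous_on (closure \<rat>) (\<Phi> s)" using \<Phi>_cont[OF Wi] by (simp add: Rats_closure_real)
  show "\<Phi> s x = 0"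
    by (rule continuous_constant_on_closure[OF cc]) (use z in \<open>auto simp: Rats_closure_real\<close>)
qed

lemma AE_good:
  assumes eq: "\<And>x \<omega>. cmod (FT (hf x) \<omega>) = cmod (FT (hg x) \<omega>)"
  shows "AE s in lborel. integrable lborel (W s) \<and> (\<forall>x\<in>\<rat>. \<Phi> s x = 0)"
proof -
  have "AE s in lborel. \<forall>x\<in>\<rat>. autoc (hf x) s = autoc (hg x) s"
    using stepA[OF eq] by (subst AE_ball_countable) (auto simp: countable_rat)
  with AE_W_int show ?thesis by eventually_elim (auto simp: \<Phi>_diff)
qed

lemma Tonelli_nonzero: "\<not> (AE s in lborel. AE u in lborel. W s u = 0)"
proof
  assume ae: "AE s in lborel. AE u in lborel. W s u = 0"
  have m2: "(\<lambda>(u,s). ennreal (norm (W s u))) \<in> borel_measurable (lborel \<Otimes>\<^sub>M lborel)"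
    unfolding W_def by measurable
  have "AE s in lborel. (\<integral>\<^sup>+ u. ennreal (norm (W s u)) \<partial>lborel) = 0"
    using ae
  proof eventually_elim
    case (elim s)
    then show ?case by (subst nn_integral_0_iff_AE) (auto elim: AE_mp)
  qed
  then have "(\<integral>\<^sup>+ s. \<integral>\<^sup>+ u. ennreal (norm (W s u)) \<partial>lborel \<partial>lborel) = (\<integral>\<^sup>+ s. (0::ennreal) \<partial>(lborel::real measure))"
    by (rule nn_integral_cong_AE)
  then have z: "(\<integral>\<^sup>+ s. \<integral>\<^sup>+ u. ennreal (norm (W s u)) \<partial>lborel \<partial>lborel) = 0" by simp
  define N where "N = (\<integral>\<^sup>+ u. ennreal (norm (\<phi> u)) \<partial>lborel)"
  have "(\<integral>\<^sup>+ s. \<integral>\<^sup>+ u. ennreal (norm (W s u)) \<partial>lborel \<partial>lborel) = (\<integral>\<^sup>+ u. \<integral>\<^sup>+ s. ennreal (norm (W s u)) \<partial>lborel \<partial>lborel)"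
    using lborel_pair.Fubini'[OF m2] by simp
  also have "\<dots> = (\<integral>\<^sup>+ u. ennreal (norm (\<phi> u)) * N \<partial>lborel)"
  proof (intro nn_integral_cong)
    fix u
    have "(\<integral>\<^sup>+ s. ennreal (norm (W s u)) \<partial>lborel) = (\<integral>\<^sup>+ s. ennreal (norm (\<phi> u)) * ennreal (norm (\<phi> (u - s))) \<partial>lborel)"
      unfolding W_def by (simp add: norm_mult ennreal_mult)
    also have "\<dots> = ennreal (norm (\<phi> u)) * (\<integral>\<^sup>+ s. ennreal (norm (\<phi> (u - s))) \<partial>lborel)"
      by (rule nn_integral_cmult) measurable
    also have "(\<integral>\<^sup>+ s. ennreal (norm (\<phi> (u - s))) \<partial>lborel) = N"
      unfolding N_def using nn_integral_real_affine[of "\<lambda>y. ennreal (norm (\<phi> y))" "-1" u] by simp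
    finally show "(\<integral>\<^sup>+ s. ennreal (norm (W s u)) \<partial>lborel) = ennreal (norm (\<phi> u)) * N" .
  qed
  also have "\<dots> = N * N" unfolding N_def by (simp add: nn_integral_multc)
  finally have "N * N = 0" using z by simp
  then have "N = 0" by simp
  then have "AE u in lborel. ennreal (norm (\<phi> u)) = 0"
    unfolding N_def by (subst (asm) nn_integral_0_iff_AE) auto
  then have "AE u in lborel. \<phi> u = 0" by eventually_elim simp
  with \<phi>_nz show False by simp
qed

lemma T_uncountable:
  assumes eq: "\<And>x \<omega>. cmod (FT (hf x) \<omega>) = cmod (FT (hg x) \<omega>)"
  shows "\<not> countable {s. \<forall>t. qf s t = qg s t}"
proof
  assume c: "countable {s. \<forall>t. qf s t = qg s t}"
  then have "{s. \<forall>t. qf s t = qg s t} \<in> null_sets lborel" by (rule countable_imp_null_set_lborel)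
  then have "AE s in lborel. s \<notin> {s. \<forall>t. qf s t = qg s t}" by (rule AE_I') auto
  with AE_good[OF eq] have "AE s in lborel. AE u in lborel. W s u = 0"
  proof eventually_elim
    case (elim s)
    then show ?case using good_in_T[of s] by blast
  qed
  with Tonelli_nonzero show False by simp
qed

lemma main_identity:
  assumes eq: "\<And>x \<omega>. cmod (FT (hf x) \<omega>) = cmod (FT (hg x) \<omega>)"
  shows "qf s t = qg s t"
proof -
  define T where "T = {s. \<forall>t. qf s t = qg s t}"
  obtain \<zeta> where \<zeta>: "\<zeta> islimpt (complex_of_real ` T)"
    using uncountable_limpt T_uncountable[OF eq] unfolding T_def by blast
  define H where "H \<sigma> = pw F (complex_of_real t) * pws F (complex_of_real t - \<sigma>) - pw G (complex_of_real t) * pws G (complex_of_real t - \<sigma>)" for \<sigma>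
  have hs: "(\<lambda>\<sigma>. pws K (c - \<sigma>)) holomorphic_on UNIV" if "pws K holomorphic_on UNIV" for K c
  proof -
    have "(pws K \<circ> (\<lambda>\<sigma>. c - \<sigma>)) holomorphic_on UNIV"
      by (rule holomorphic_on_compose) (auto intro: holomorphic_intros holomorphic_on_subset[OF that])
    then show ?thesis by (simp add: comp_def)
  qed
  have Hh: "H holomorphic_on UNIV"
    unfolding H_def[abs_def] by (intro holomorphic_intros hs f.pws_holo g.pws_holo)
  have Hr: "H (complex_of_real s') = qf s' t - qg s' t" for s'
  proof -
    have "complex_of_real t - complex_of_real s' = complex_of_real (t - s')" by simp
    then show ?thesis unfolding H_def qf_def qg_def
      by (simp only: f.pws_real g.pws_real f.fr_def[symmetric] g.fr_def[symmetric])
  qed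
  have "H (complex_of_real s) = 0"
  proof (rule analytic_continuation[OF Hh open_UNIV connected_UNIV subset_UNIV UNIV_I \<zeta>])
    show "\<And>z. z \<in> complex_of_real ` T \<Longrightarrow> H z = 0" using Hr by (auto simp: T_def)
  qed auto
  then show ?thesis using Hr by simp
qed

end

lemma stft_scale:
  assumes "\<And>z. f z = c * g z"
  shows "stft \<phi> (\<lambda>t. f (complex_of_real t)) x \<omega> = c * stft \<phi> (\<lambda>t. g (complex_of_real t)) x \<omega>"
proof -
  have "stft \<phi> (\<lambda>t. f (complex_of_real t)) x \<omega> = (LINT t|lebesgue. c * (g (complex_of_real t) * cnj (\<phi> (t - x)) * exp (complex_of_real (- 2 * pi) * \<i> * complex_of_real t * complex_of_real \<omega>)))"
    unfolding stft_def assms by (simp only: mult.assoc)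
  also have "\<dots> = c * stft \<phi> (\<lambda>t. g (complex_of_real t)) x \<omega>"
    unfolding stft_def by (rule integral_mult_right_zero)
  finally show ?thesis .
qed

theorem mainTheorem12:
  fixes \<phi> :: "real \<Rightarrow> complex" and B :: real and f g :: "complex \<Rightarrow> complex"
  assumes "square_integrable_on \<phi> UNIV"
    and "compactly_supported \<phi>"
    and "\<not> (AE t in lebesgue. \<phi> t = 0)"
    and "B > 0"
    and "f \<in> paley_wiener B" and "g \<in> paley_wiener B"
  shows "(\<exists>\<alpha>::real. \<forall>z. f z = exp (\<i> * complex_of_real \<alpha>) * g z) \<longleftrightarrow>
         (\<forall>x \<omega>. cmod (stft \<phi> (\<lambda>t. f (complex_of_real t)) x \<omega>) =
                 cmod (stft \<phi> (\<lambda>t. g (complex_of_real t)) x \<omega>))"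
proof
  assume "\<exists>\<alpha>::real. \<forall>z. f z = exp (\<i> * complex_of_real \<alpha>) * g z"
  then obtain \<alpha> :: real where \<alpha>: "\<And>z. f z = exp (\<i> * complex_of_real \<alpha>) * g z" by blast
  show "\<forall>x \<omega>. cmod (stft \<phi> (\<lambda>t. f (complex_of_real t)) x \<omega>) = cmod (stft \<phi> (\<lambda>t. g (complex_of_real t)) x \<omega>)"
    using stft_scale[of f "exp (\<i> * complex_of_real \<alpha>)" g, OF \<alpha>] by (simp add: norm_mult)
next
  assume hyp: "\<forall>x \<omega>. cmod (stft \<phi> (\<lambda>t. f (complex_of_real t)) x \<omega>) = cmod (stft \<phi> (\<lambda>t. g (complex_of_real t)) x \<omega>)"
  obtain \<phi>b R where \<phi>b: "integrable lborel \<phi>b" "\<And>t. R < \<bar>t\<bar> \<Longrightarrow> \<phi>b t = 0"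
    "\<not> (AE t in lborel. \<phi>b t = 0)" "AE t in lborel. \<phi> t = \<phi>b t"
    using window_repr[OF assms(1-3)] by blast
  obtain F where F: "integrable lborel F" "\<And>\<xi>. B < \<bar>\<xi>\<bar> \<Longrightarrow> F \<xi> = 0"
    "\<And>z. f z = (LBINT \<xi>. F \<xi> * exp (complex_of_real (2 * pi) * \<i> * complex_of_real \<xi> * z))"
    using PW_repr[OF assms(5)] by blast
  obtain G where G: "integrable lborel G" "\<And>\<xi>. B < \<bar>\<xi>\<bar> \<Longrightarrow> G \<xi> = 0"
    "\<And>z. g z = (LBINT \<xi>. G \<xi> * exp (complex_of_real (2 * pi) * \<i> * complex_of_real \<xi> * z))"
    using PW_repr[OF assms(6)] by blast
  interpret setting F G B \<phi>b R
    using F G \<phi>b by unfold_locales auto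
  have fpw: "f = pw F" using F(3) by (auto simp: pw_def)
  have gpw: "g = pw G" using G(3) by (auto simp: pw_def)
  have fr: "(\<lambda>t. f (complex_of_real t)) = f.fr" by (auto simp: fpw f.fr_def)
  have gr: "(\<lambda>t. g (complex_of_real t)) = g.fr" by (auto simp: gpw g.fr_def)
  have \<phi>bm[measurable]: "\<phi>b \<in> borel_measurable borel" using \<phi>b(1) by auto
  have sf: "stft \<phi> (\<lambda>t. f (complex_of_real t)) x \<omega> = FT (hf x) \<omega>" for x \<omega>
    unfolding fr by (subst stft_repr[OF \<phi>b(4)]) (auto simp: FT_def hf_def)
  have sg: "stft \<phi> (\<lambda>t. g (complex_of_real t)) x \<omega> = FT (hg x) \<omega>" for x \<omega>
    unfolding gr by (subst stft_repr[OF \<phi>b(4)]) (auto simp: FT_def hg_def)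
  have eq: "cmod (FT (hf x) \<omega>) = cmod (FT (hg x) \<omega>)" for x \<omega>
    using hyp sf sg by metis
  have id: "f.fr t * cnj (f.fr (t - s)) = g.fr t * cnj (g.fr (t - s))" for t s
    using main_identity[OF eq, of s t] by (simp add: qf_def qg_def)
  show "\<exists>\<alpha>::real. \<forall>z. f z = exp (\<i> * complex_of_real \<alpha>) * g z"
  proof (cases "\<forall>u. g.fr u = 0")
    case True
    have fr0: "f.fr t = 0" for t
    proof -
      have "f.fr t * cnj (f.fr t) = 0" using id[of t 0] True by simp
      then show ?thesis by simp
    qed
    have f0: "f z = 0" for z
      unfolding fpw by (rule holo_zero_on_reals[OF f.pw_holo]) (use fr0 in \<open>simp add: f.fr_def\<close>)
    have g0: "g z = 0" for z
      unfolding gpw by (rule holo_zero_on_reals[OF g.pw_holo]) (use True in \<open>simp add: g.fr_def\<close>)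
    show ?thesis by (intro exI[of _ 0]) (simp add: f0 g0)
  next
    case False
    then obtain u0 where u0: "g.fr u0 \<noteq> 0" by blast
    have "f.fr u0 * cnj (f.fr u0) = g.fr u0 * cnj (g.fr u0)" using id[of u0 0] by simp
    then have nrm: "cmod (f.fr u0) = cmod (g.fr u0)"
      by (metis complex_norm_square norm_ge_zero of_real_eq_iff power2_eq_imp_eq)
    then have fu0: "f.fr u0 \<noteq> 0" using u0 by auto
    define c where "c = cnj (g.fr u0) / cnj (f.fr u0)"
    have fc: "f.fr t = c * g.fr t" for t
    proof -
      have "f.fr t * cnj (f.fr u0) = g.fr t * cnj (g.fr u0)"
        using id[of t "t - u0"] by simp
      then show ?thesis using fu0 by (simp add: c_def field_simps)
    qed
    have c1: "cmod c = 1" using u0 nrm by (simp add: c_def norm_divide)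
    then have c0: "c \<noteq> 0" by auto
    have ce: "exp (\<i> * complex_of_real (Arg c)) = c"
      using cis_Arg[OF c0] c1 by (simp add: cis_conv_exp sgn_div_norm)
    have "f z - c * g z = 0" for z
    proof (rule holo_zero_on_reals[where H="\<lambda>z. f z - c * g z"])
      show "(\<lambda>z. f z - c * g z) holomorphic_on UNIV"
        unfolding fpw gpw by (intro holomorphic_intros f.pw_holo g.pw_holo)
      show "f (complex_of_real t) - c * g (complex_of_real t) = 0" for t
        using fc[of t] fun_cong[OF fr, of t] fun_cong[OF gr, of t] by simp
    qed
    then have "f z = c * g z" for z by (simp add: right_minus_eq)
    then show ?thesis by (intro exI[of _ "Arg c"]) (simp only: ce, simp)
  qed
qed

end
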